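(* Let $k\ge1$ be the cache size and let $G$ be any access graph containing a path with $k+1$ vertices. If $k$ is odd, then \[\mathcal{I}^{G}[\mathrm{FWF},\mathrm{FIFO}]=\left[0,\ 1-\frac1k\right],\] and if $k$ is even, then \[\left[0,\ \frac{k^2-k-1}{k^2}\right]\subseteq \mathcal{I}^{G}[\mathrm{FWF},\mathrm{FIFO}]\subseteq\left[0,\ \frac{k-1}{k}\right].\]
   Context: Paging: a cache holds at most $k$ pages and is initially empty. A request to a page in the cache is a hit; otherwise it is a fault, the page is brought into the cache, evicting a page first if the cache is full. $\mathcal{A}(I)$ is the number of faults of $\mathcal{A}$ on request sequence $I$. FIFO evicts the cached page that entered the cache earliest. FWF (flush-when-full): on a fault with a full cache, it empties the cache and then brings in the requested page. Access graph: a graph $G$ whose vertices are the pages; a request sequence respects $G$ if any two consecutive requests are identical or adjacent in $G$; $L(G)$ is the set of such sequences. Relative interval: $\mathrm{Min}_{\mathcal{A},\mathcal{B}}(n,G)=\min\{\mathcal{A}(I)-\mathcal{B}(I): I\in L(G),|I|=n\}$, $\mathrm{Max}_{\mathcal{A},\mathcal{B}}(n,G)$ analogously with max; $\mathrm{Min}^G(\mathcal{A},\mathcal{B})=\liminf_{n\to\infty}\mathrm{Min}_{\mathcal{A},\mathcal{B}}(n,G)/n$, $\mathrm{Max}^G(\mathcal{A},\mathcal{B})=\limsup_{n\to\infty}\mathrm{Max}_{\mathcal{A},\mathcal{B}}(n,G)/n$, and $\mathcal{I}^G[\mathcal{A},\mathcal{B}]=[\mathrm{Min}^G(\mathcal{A},\mathcal{B}),\mathrm{Max}^G(\mathcal{A},\mathcal{B})]$.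 *)

theory Defs
  imports "HOL-Library.Extended_Real" "HOL-Library.Liminf_Limsup"
begin

text \<open>FIFO: the cache is a queue (list, oldest page first). Returns the number of faults
  when serving the request sequence starting from the given cache contents.\<close>
fun fifo_faults :: "nat \<Rightarrow> 'a list \<Rightarrow> 'a list \<Rightarrow> nat" where
  "fifo_faults k q [] = 0"
| "fifo_faults k q (r # rs) =
     (if r \<in> set q then fifo_faults k q rs
      else Suc (fifo_faults k (if length q < k then q @ [r] else tl q @ [r]) rs))"

definition FIFO :: "nat \<Rightarrow> 'a list \<Rightarrow> nat" where
  "FIFO k I = fifo_faults k [] I"

fun fwf_faults :: "nat \<Rightarrow> 'a set \<Rightarrow> 'a list \<Rightarrow> nat" where
  "fwf_faults k C [] = 0"
| "fwf_faults k C (r # rs) =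
     (if r \<in> C then fwf_faults k C rs
      else Suc (fwf_faults k (if card C < k then insert r C else {r}) rs))"

definition FWF :: "nat \<Rightarrow> 'a list \<Rightarrow> nat" where
  "FWF k I = fwf_faults k {} I"

definition access_graph :: "'a set \<Rightarrow> ('a \<Rightarrow> 'a \<Rightarrow> bool) \<Rightarrow> bool" where
  "access_graph V E \<longleftrightarrow> finite V \<and> (\<forall>x y. E x y \<longrightarrow> x \<in> V \<and> y \<in> V)
     \<and> (\<forall>x y. E x y \<longrightarrow> E y x) \<and> (\<forall>x. \<not> E x x)"

definition respects_graph :: "'a set \<Rightarrow> ('a \<Rightarrow> 'a \<Rightarrow> bool) \<Rightarrow> 'a list \<Rightarrow> bool" where
  "respects_graph V E I \<longleftrightarrow> set I \<subseteq> V \<and>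
     (\<forall>i. Suc i < length I \<longrightarrow> I ! i = I ! Suc i \<or> E (I ! i) (I ! Suc i))"

definition has_path :: "'a set \<Rightarrow> ('a \<Rightarrow> 'a \<Rightarrow> bool) \<Rightarrow> nat \<Rightarrow> bool" where
  "has_path V E m \<longleftrightarrow> (\<exists>p. length p = m \<and> distinct p \<and> set p \<subseteq> V \<and>
     (\<forall>i. Suc i < length p \<longrightarrow> E (p ! i) (p ! Suc i)))"

definition diffs :: "('a list \<Rightarrow> nat) \<Rightarrow> ('a list \<Rightarrow> nat) \<Rightarrow> nat \<Rightarrow>
    'a set \<Rightarrow> ('a \<Rightarrow> 'a \<Rightarrow> bool) \<Rightarrow> real set" where
  "diffs A B n V E = {real (A I) - real (B I) | I. respects_graph V E I \<and> length I = n}"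

definition MinAB :: "('a list \<Rightarrow> nat) \<Rightarrow> ('a list \<Rightarrow> nat) \<Rightarrow> nat \<Rightarrow>
    'a set \<Rightarrow> ('a \<Rightarrow> 'a \<Rightarrow> bool) \<Rightarrow> real" where
  "MinAB A B n V E = Min (diffs A B n V E)"

definition MaxAB :: "('a list \<Rightarrow> nat) \<Rightarrow> ('a list \<Rightarrow> nat) \<Rightarrow> nat \<Rightarrow>
    'a set \<Rightarrow> ('a \<Rightarrow> 'a \<Rightarrow> bool) \<Rightarrow> real" where
  "MaxAB A B n V E = Max (diffs A B n V E)"

definition MinG :: "('a list \<Rightarrow> nat) \<Rightarrow> ('a list \<Rightarrow> nat) \<Rightarrow>
    'a set \<Rightarrow> ('a \<Rightarrow> 'a \<Rightarrow> bool) \<Rightarrow> ereal" where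
  "MinG A B V E = liminf (\<lambda>n. ereal (MinAB A B n V E / real n))"

definition MaxG :: "('a list \<Rightarrow> nat) \<Rightarrow> ('a list \<Rightarrow> nat) \<Rightarrow>
    'a set \<Rightarrow> ('a \<Rightarrow> 'a \<Rightarrow> bool) \<Rightarrow> ereal" where
  "MaxG A B V E = limsup (\<lambda>n. ereal (MaxAB A B n V E / real n))"

definition rel_interval :: "('a list \<Rightarrow> nat) \<Rightarrow> ('a list \<Rightarrow> nat) \<Rightarrow>
    'a set \<Rightarrow> ('a \<Rightarrow> 'a \<Rightarrow> bool) \<Rightarrow> ereal set" where
  "rel_interval A B V E = {MinG A B V E .. MaxG A B V E}"

end

theory Submission
  imports Defs
begin


fun fifo_st :: "nat \<Rightarrow> 'a list \<Rightarrow> 'a list \<Rightarrow> 'a list" where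
  "fifo_st k q [] = q"
| "fifo_st k q (r # rs) =
     (if r \<in> set q then fifo_st k q rs
      else fifo_st k (if length q < k then q @ [r] else tl q @ [r]) rs)"

fun fwf_st :: "nat \<Rightarrow> 'a set \<Rightarrow> 'a list \<Rightarrow> 'a set" where
  "fwf_st k C [] = C"
| "fwf_st k C (r # rs) =
     (if r \<in> C then fwf_st k C rs
      else fwf_st k (if card C < k then insert r C else {r}) rs)"

lemma fifo_append: "fifo_faults k q (xs @ ys) = fifo_faults k q xs + fifo_faults k (fifo_st k q xs) ys"
  by (induction xs arbitrary: q) auto

lemma fifo_st_append: "fifo_st k q (xs @ ys) = fifo_st k (fifo_st k q xs) ys"
  by (induction xs arbitrary: q) auto

lemma fwf_append: "fwf_faults k C (xs @ ys) = fwf_faults k C xs + fwf_faults k (fwf_st k C xs) ys"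
  by (induction xs arbitrary: C) auto

lemma fwf_st_append: "fwf_st k C (xs @ ys) = fwf_st k (fwf_st k C xs) ys"
  by (induction xs arbitrary: C) auto

lemma fwf_le_length: "fwf_faults k C xs \<le> length xs"
  by (induction xs arbitrary: C) (auto intro: le_SucI)

lemma fifo_le_length: "fifo_faults k q xs \<le> length xs"
  by (induction xs arbitrary: q) (auto intro: le_SucI)

lemma fwf_fifo_ub:
  assumes "1 \<le> k"
  shows "finite C \<Longrightarrow> card C \<le> k \<Longrightarrow> length q \<le> k \<Longrightarrow>
    fwf_faults k C rs + card C \<le> k * fifo_faults k q rs + 2*k \<and>
    (C \<subseteq> set q \<longrightarrow> fwf_faults k C rs + card C \<le> k * fifo_faults k q rs + k)"
proof (induction rs arbitrary: C q)
  case Nil then show ?case by auto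
next
  case (Cons r rs)
  define q' where "q' = (if length q < k then q @ [r] else tl q @ [r])"
  have lq': "length q' \<le> k" using Cons.prems assms unfolding q'_def by (cases q) auto
  have rq': "r \<in> set q'" unfolding q'_def using assms Cons.prems by (cases q) auto
  show ?case
  proof (cases "r \<in> C")
    case True
    show ?thesis
    proof (cases "r \<in> set q")
      case True
      with \<open>r \<in> C\<close> Cons show ?thesis by auto
    next
      case False
      have "fwf_faults k C (r#rs) + card C \<le> k * fifo_faults k q' rs + 2*k"
        using Cons.IH[of C q'] Cons.prems lq' \<open>r \<in> C\<close> by auto
      then have "fwf_faults k C (r#rs) + card C \<le> k * fifo_faults k q (r#rs) + 2*k"
        using False q'_def by auto
      moreover have "\<not> C \<subseteq> set q" using False \<open>r \<in> C\<close> by auto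
      ultimately show ?thesis by auto
    qed
  next
    case rC: False
    show ?thesis
    proof (cases "card C < k")
      case True
      have fi: "finite (insert r C)" "card (insert r C) = Suc (card C)" using Cons.prems rC by auto
      show ?thesis
      proof (cases "r \<in> set q")
        case True
        have IH: "fwf_faults k (insert r C) rs + card (insert r C) \<le> k * fifo_faults k q rs + 2*k \<and>
          (insert r C \<subseteq> set q \<longrightarrow> fwf_faults k (insert r C) rs + card (insert r C) \<le> k * fifo_faults k q rs + k)"
          using Cons.IH[of "insert r C" q] Cons.prems fi True \<open>card C < k\<close> by auto
        then show ?thesis using rC True \<open>card C < k\<close> fi by auto
      next
        case False
        have IH: "fwf_faults k (insert r C) rs + card (insert r C) \<le> k * fifo_faults k q' rs + 2*k"
          using Cons.IH[of "insert r C" q'] Cons.prems fi lq' \<open>card C < k\<close> by auto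
        then show ?thesis using rC False \<open>card C < k\<close> fi q'_def by auto
      qed
    next
      case False
      then have cC: "card C = k" using Cons.prems by auto
      have f1: "finite {r}" "card {r} \<le> k" using assms by auto
      show ?thesis
      proof (cases "r \<in> set q")
        case True
        have IH: "fwf_faults k {r} rs + 1 \<le> k * fifo_faults k q rs + k"
          using Cons.IH[of "{r}" q] Cons.prems f1 True by auto
        have ns: "\<not> C \<subseteq> set q"
        proof
          assume "C \<subseteq> set q"
          moreover have "card (set q) \<le> k" using Cons.prems card_length le_trans by blast
          ultimately have "C = set q" using cC by (metis card_seteq List.finite_set)
          then show False using True rC by auto
        qed
        show ?thesis using IH rC cC True ns by auto
      next
        case False
        have IH: "fwf_faults k {r} rs + 1 \<le> k * fifo_faults k q' rs + k"
          using Cons.IH[of "{r}" q'] Cons.prems f1 lq' rq' by auto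
        show ?thesis using IH rC cC False q'_def by auto
      qed
    qed
  qed
qed

lemma fifo_fwf_lb:
  assumes "1 \<le> k"
  shows "finite C \<Longrightarrow> card C \<le> k \<Longrightarrow> q = A @ B \<Longrightarrow> set B \<subseteq> C \<Longrightarrow> distinct B \<Longrightarrow>
    fifo_faults k q rs + length B \<le> fwf_faults k C rs + card C"
proof (induction rs arbitrary: C q A B)
  case Nil
  then show ?case using card_mono[of C "set B"] distinct_card[of B] by auto
next
  case (Cons r rs)
  have lB: "length B \<le> card C" using Cons.prems card_mono[of C "set B"] distinct_card[of B] by auto
  show ?case
  proof (cases "r \<in> C")
    case rC: True
    show ?thesis
    proof (cases "r \<in> set q")
      case True then show ?thesis using Cons rC by auto
    next
      case False
      have rB: "r \<notin> set B" using False Cons.prems by auto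
      have lt: "length B < card C"
      proof -
        have "set B \<subset> C" using rB rC Cons.prems by auto
        then have "card (set B) < card C" using Cons.prems psubset_card_mono by blast
        then show ?thesis using distinct_card[of B] Cons.prems by auto
      qed
      obtain A' where q': "(if length q < k then q @ [r] else tl q @ [r]) = A' @ (B @ [r])"
      proof (cases "length q < k")
        case True then show ?thesis using that Cons.prems by auto
      next
        case False
        then have "A \<noteq> []" using lt Cons.prems by auto
        then show ?thesis using that[of "tl A"] False Cons.prems by auto
      qed
      have "fifo_faults k (A' @ (B @ [r])) rs + length (B @ [r]) \<le> fwf_faults k C rs + card C"
        using Cons.IH[of C "A' @ (B @ [r])" A' "B @ [r]"] Cons.prems rB rC by auto
      then show ?thesis using False rC q' by auto
    qed
  next
    case rC: False
    have rB: "r \<notin> set B" using rC Cons.prems by auto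
    show ?thesis
    proof (cases "card C < k")
      case ck: True
      have fi: "finite (insert r C)" "card (insert r C) = Suc (card C)" using Cons.prems rC by auto
      show ?thesis
      proof (cases "r \<in> set q")
        case True
        have "fifo_faults k q rs + length B \<le> fwf_faults k (insert r C) rs + card (insert r C)"
          using Cons.IH[of "insert r C" q A B] Cons.prems fi ck by auto
        then show ?thesis using True rC ck fi by auto
      next
        case False
        obtain A' where q': "(if length q < k then q @ [r] else tl q @ [r]) = A' @ (B @ [r])"
        proof (cases "length q < k")
          case True then show ?thesis using that Cons.prems by auto
        next
          case False
          then have "A \<noteq> []" using lB ck Cons.prems by auto
          then show ?thesis using that[of "tl A"] False Cons.prems by auto
        qed
        have "fifo_faults k (A' @ (B @ [r])) rs + length (B @ [r]) \<le> fwf_faults k (insert r C) rs + card (insert r C)"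
          using Cons.IH[of "insert r C" "A' @ (B @ [r])" A' "B @ [r]"] Cons.prems rB fi ck by auto
        then show ?thesis using False rC q' ck fi by auto
      qed
    next
      case ck: False
      show ?thesis
      proof (cases "r \<in> set q")
        case True
        have "fifo_faults k q rs + 0 \<le> fwf_faults k {r} rs + card {r}"
          using Cons.IH[of "{r}" q q "[]"] assms by auto
        then show ?thesis using True rC ck lB Cons.prems by auto
      next
        case False
        obtain A' where q': "(if length q < k then q @ [r] else tl q @ [r]) = A' @ [r]"
          by (cases "length q < k") auto
        have "fifo_faults k (A' @ [r]) rs + 1 \<le> fwf_faults k {r} rs + card {r}"
          using Cons.IH[of "{r}" "A' @ [r]" A' "[r]"] assms by auto
        then show ?thesis using False rC ck q' lB Cons.prems by auto
      qed
    qed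
  qed
qed



lemma fwf_map:
  "inj_on f (C \<union> set rs) \<Longrightarrow> finite C \<Longrightarrow> fwf_faults k (f ` C) (map f rs) = fwf_faults k C rs"
proof (induction rs arbitrary: C)
  case Nil then show ?case by simp
next
  case (Cons r rs)
  have eq: "(f r \<in> f ` C) = (r \<in> C)" using Cons.prems by (auto simp: inj_on_def)
  have cd: "card (f ` C) = card C" using Cons.prems by (intro card_image) (auto intro: inj_on_subset)
  show ?case
  proof (cases "r \<in> C")
    case True then show ?thesis using Cons eq by (auto intro: inj_on_subset)
  next
    case False
    show ?thesis
    proof (cases "card C < k")
      case True
      have "fwf_faults k (f ` insert r C) (map f rs) = fwf_faults k (insert r C) rs"
        using Cons.prems by (intro Cons.IH) (auto intro: inj_on_subset)
      then show ?thesis using False True eq cd by simp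
    next
      case F2: False
      have "fwf_faults k (f ` {r}) (map f rs) = fwf_faults k {r} rs"
        using Cons.prems by (intro Cons.IH) (auto intro: inj_on_subset)
      then show ?thesis using False F2 eq cd by simp
    qed
  qed
qed

lemma fifo_map:
  "inj_on f (set q \<union> set rs) \<Longrightarrow> fifo_faults k (map f q) (map f rs) = fifo_faults k q rs"
proof (induction rs arbitrary: q)
  case Nil then show ?case by simp
next
  case (Cons r rs)
  have eq: "(f r \<in> set (map f q)) = (r \<in> set q)" using Cons.prems by (auto simp: inj_on_def)
  show ?case
  proof (cases "r \<in> set q")
    case True then show ?thesis using Cons eq by (auto intro: inj_on_subset)
  next
    case False
    have m: "map f (if length q < k then q @ [r] else tl q @ [r]) =
      (if length (map f q) < k then map f q @ [f r] else tl (map f q) @ [f r])" by (simp add: map_tl)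
    have "fifo_faults k (map f (if length q < k then q @ [r] else tl q @ [r])) (map f rs)
        = fifo_faults k (if length q < k then q @ [r] else tl q @ [r]) rs"
    proof (intro Cons.IH)
      have "set (if length q < k then q @ [r] else tl q @ [r]) \<union> set rs \<subseteq> set q \<union> set (r # rs)"
        by (cases q) auto
      then show "inj_on f (set (if length q < k then q @ [r] else tl q @ [r]) \<union> set rs)"
        using Cons.prems by (rule inj_on_subset[rotated])
    qed
    then show ?thesis using False eq m by simp
  qed
qed

lemma FIFO_le_FWF: "1 \<le> k \<Longrightarrow> FIFO k I \<le> FWF k I"
  using fifo_fwf_lb[of k "{}" "[]" "[]" "[]" I] by (simp add: FIFO_def FWF_def)

lemma FWF_le_FIFO: "1 \<le> k \<Longrightarrow> FWF k I \<le> k * FIFO k I + k"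
  using fwf_fifo_ub[of k "{}" "[]" I] by (simp add: FIFO_def FWF_def)

lemma FWF_le_len: "FWF k I \<le> length I"
  by (simp add: FWF_def fwf_le_length)

lemma diff_ub:
  assumes "1 \<le> k"
  shows "real (FWF k I) - real (FIFO k I) \<le> (1 - 1 / real k) * real (length I) + 1"
proof -
  have a: "real (FWF k I) \<le> real k * real (FIFO k I) + real k"
    using FWF_le_FIFO[OF assms, of I] by (metis of_nat_add of_nat_le_iff of_nat_mult)
  have b: "real (FWF k I) \<le> real (length I)" using FWF_le_len by simp
  have kp: "real k > 0" using assms by simp
  have "real (FIFO k I) \<ge> real (FWF k I) / real k - 1" using a kp by (simp add: field_simps)
  then have "real (FWF k I) - real (FIFO k I) \<le> (1 - 1 / real k) * real (FWF k I) + 1"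
    by (simp add: algebra_simps)
  also have "\<dots> \<le> (1 - 1 / real k) * real (length I) + 1"
    using b kp assms by (intro add_right_mono mult_left_mono) (auto simp: field_simps)
  finally show ?thesis .
qed

lemma fwf_rep: "v \<in> C \<Longrightarrow> fwf_faults k C (replicate n v) = 0"
  by (induction n) auto
lemma fifo_rep: "v \<in> set q \<Longrightarrow> fifo_faults k q (replicate n v) = 0"
  by (induction n) auto

lemma FWF_rep: "1 \<le> k \<Longrightarrow> FWF k (replicate n v) = (if n = 0 then 0 else 1)"
  by (cases n) (auto simp: FWF_def fwf_rep)
lemma FIFO_rep: "1 \<le> k \<Longrightarrow> FIFO k (replicate n v) = (if n = 0 then 0 else 1)"
  by (cases n) (auto simp: FIFO_def fifo_rep)

lemma respects_rep: "v \<in> V \<Longrightarrow> respects_graph V E (replicate n v)"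
  by (auto simp: respects_graph_def)

lemma diffs_finite: "finite V \<Longrightarrow> finite (diffs A B n V E)"
proof -
  assume fV: "finite V"
  have "diffs A B n V E \<subseteq> (\<lambda>I. real (A I) - real (B I)) ` {I. set I \<subseteq> V \<and> length I = n}"
    by (auto simp: diffs_def respects_graph_def)
  moreover have "finite {I. set I \<subseteq> V \<and> length I = n}" using finite_lists_length_eq[OF fV] .
  ultimately show ?thesis by (meson finite_surj)
qed

lemma diffs_ne: "v \<in> V \<Longrightarrow> diffs A B n V E \<noteq> {}"
  using respects_rep[of v V E n] by (auto simp: diffs_def)

lemma in_diffs: "respects_graph V E I \<Longrightarrow> length I = n \<Longrightarrow> real (A I) - real (B I) \<in> diffs A B n V E"
  by (auto simp: diffs_def)

context
  fixes k :: nat and V :: "'a set" and E :: "'a \<Rightarrow> 'a \<Rightarrow> bool" and v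
  assumes k1: "1 \<le> k" and fV: "finite V" and vV: "v \<in> V"
begin

lemma MinAB_0: "MinAB (FWF k) (FIFO k) n V E = 0"
proof -
  let ?D = "diffs (FWF k) (FIFO k) n V E"
  have "\<forall>x\<in>?D. 0 \<le> x" using FIFO_le_FWF[OF k1] by (auto simp: diffs_def)
  moreover have "0 \<in> ?D" using in_diffs[where V=V and E=E and I="replicate n v" and n=n and A="FWF k" and B="FIFO k", OF respects_rep[OF vV]]
    by (simp add: FWF_rep[OF k1] FIFO_rep[OF k1])
  ultimately show ?thesis unfolding MinAB_def
    using diffs_finite[OF fV] by (metis Min_eqI)
qed

lemma MaxAB_ge0: "0 \<le> MaxAB (FWF k) (FIFO k) n V E"
proof -
  let ?D = "diffs (FWF k) (FIFO k) n V E"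
  have "0 \<in> ?D" using in_diffs[where V=V and E=E and I="replicate n v" and n=n and A="FWF k" and B="FIFO k", OF respects_rep[OF vV]]
    by (simp add: FWF_rep[OF k1] FIFO_rep[OF k1])
  then show ?thesis unfolding MaxAB_def using diffs_finite[OF fV] by (simp add: Max_ge_iff)
qed

lemma MaxAB_ub: "MaxAB (FWF k) (FIFO k) n V E \<le> (1 - 1 / real k) * real n + 1"
proof -
  let ?D = "diffs (FWF k) (FIFO k) n V E"
  have "\<forall>x\<in>?D. x \<le> (1 - 1 / real k) * real n + 1" using diff_ub[OF k1] by (auto simp: diffs_def)
  then show ?thesis unfolding MaxAB_def using diffs_finite[OF fV] diffs_ne[OF vV]
    by (simp add: Max_le_iff)
qed

lemma MaxAB_ge: "respects_graph V E I \<Longrightarrow> length I = n \<Longrightarrow>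
    real (FWF k I) - real (FIFO k I) \<le> MaxAB (FWF k) (FIFO k) n V E"
  unfolding MaxAB_def using diffs_finite[OF fV] in_diffs by (metis Max_ge)

lemma MinG_0: "MinG (FWF k) (FIFO k) V E = 0"
  unfolding MinG_def MinAB_0 by (simp add: Liminf_const zero_ereal_def)

lemma MaxG_ge0: "0 \<le> MaxG (FWF k) (FIFO k) V E"
proof -
  have "Limsup sequentially (\<lambda>n. (0::ereal)) \<le> MaxG (FWF k) (FIFO k) V E"
    unfolding MaxG_def using MaxAB_ge0 by (intro Limsup_mono always_eventually) auto
  then show ?thesis by (simp add: Limsup_const)
qed

lemma MaxG_ub: "MaxG (FWF k) (FIFO k) V E \<le> ereal (1 - 1 / real k)"
proof -
  have "MaxG (FWF k) (FIFO k) V E \<le> Limsup sequentially (\<lambda>n. ereal ((1 - 1 / real k) + 1 / real n))"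
    unfolding MaxG_def
  proof (intro Limsup_mono eventually_sequentiallyI[of 1])
    fix n :: nat assume "1 \<le> n"
    then have "MaxAB (FWF k) (FIFO k) n V E / real n \<le> ((1 - 1 / real k) * real n + 1) / real n"
      using MaxAB_ub by (intro divide_right_mono) auto
    also have "\<dots> = (1 - 1 / real k) + 1 / real n" using \<open>1 \<le> n\<close> by (simp add: field_simps)
    finally show "ereal (MaxAB (FWF k) (FIFO k) n V E / real n) \<le> ereal ((1 - 1 / real k) + 1 / real n)"
      by simp
  qed
  also have "\<dots> = ereal (1 - 1 / real k)"
    by (intro lim_imp_Limsup) (auto intro!: tendsto_eq_intros lim_1_over_n)
  finally show ?thesis .
qed

lemma MaxG_lb:
  assumes "\<And>n. n \<ge> n0 \<Longrightarrow> L * real n - C \<le> MaxAB (FWF k) (FIFO k) n V E"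
  shows "ereal L \<le> MaxG (FWF k) (FIFO k) V E"
proof -
  have "Limsup sequentially (\<lambda>n. ereal (L - C / real n)) \<le> MaxG (FWF k) (FIFO k) V E"
    unfolding MaxG_def
  proof (intro Limsup_mono eventually_sequentiallyI[of "max n0 1"])
    fix n :: nat assume "max n0 1 \<le> n"
    then have n: "n \<ge> n0" "n \<ge> 1" by auto
    have "L - C / real n = (L * real n - C) / real n" using n by (simp add: field_simps)
    also have "\<dots> \<le> MaxAB (FWF k) (FIFO k) n V E / real n"
      using assms[OF n(1)] n by (intro divide_right_mono) auto
    finally show "ereal (L - C / real n) \<le> ereal (MaxAB (FWF k) (FIFO k) n V E / real n)" by simp
  qed
  moreover have "Limsup sequentially (\<lambda>n. ereal (L - C / real n)) = ereal L"
  proof (intro lim_imp_Limsup)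
    have "(\<lambda>n. L - C * (1 / real n)) \<longlonglongrightarrow> L - C * 0"
      by (intro tendsto_intros lim_1_over_n)
    then show "(\<lambda>n. ereal (L - C / real n)) \<longlonglongrightarrow> ereal L" by (simp add: tendsto_ereal)
  qed simp
  ultimately show ?thesis by simp
qed

end



definition bw :: "nat \<Rightarrow> nat \<Rightarrow> nat" where
  "bw k t = (let r = t mod (2*k) in min r (2*k - r))"

lemma bw_blk: "1 \<le> k \<Longrightarrow> r \<le> 2*k \<Longrightarrow> bw k (2*k*j + r) = min r (2*k - r)"
proof (cases "r = 2*k")
  case True
  assume "1 \<le> k"
  have "2*k*j + r = 2*k*(Suc j)" using True by simp
  then show ?thesis using True by (simp add: bw_def)
next
  case False
  assume "1 \<le> k" "r \<le> 2*k"
  then have "(2*k*j + r) mod (2*k) = r" using False by simp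
  then show ?thesis by (simp add: bw_def)
qed

lemma bw_minus: "1 \<le> k \<Longrightarrow> 1 \<le> j \<Longrightarrow> d \<le> 2*k \<Longrightarrow> bw k (2*k*j - d) = min d (2*k - d)"
proof -
  assume a: "1 \<le> k" "1 \<le> j" "d \<le> 2*k"
  obtain j' where j: "j = Suc j'" using a by (cases j) auto
  have "2*k*j - d = 2*k*j' + (2*k - d)" using a j by (simp add: algebra_simps)
  then show ?thesis using bw_blk[OF a(1), of "2*k - d" j'] a by simp
qed

lemma bw_rel:
  assumes k: "1 \<le> k" and B: "B = 2*k*j" and j: "1 \<le> j"
    and t1: "B \<le> t + 2*k" and t2: "t \<le> B + 2*k"
  shows "bw k t = (if B \<le> t then min (t - B) (2*k - (t - B)) else min (B - t) (2*k - (B - t)))"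
proof (cases "B \<le> t")
  case True
  have "t = 2*k*j + (t - B)" using True B by simp
  then have "bw k t = bw k (2*k*j + (t - B))" by simp
  also have "\<dots> = min (t - B) (2*k - (t - B))" using True t2 by (intro bw_blk k) simp
  finally show ?thesis using True by simp
next
  case False
  have "t = 2*k*j - (B - t)" using False B by simp
  then have "bw k t = bw k (2*k*j - (B - t))" by simp
  also have "\<dots> = min (B - t) (2*k - (B - t))" using False t1 by (intro bw_minus k j) simp
  finally show ?thesis using False by simp
qed

lemma bw_le: "1 \<le> k \<Longrightarrow> bw k t \<le> k"
  by (simp add: bw_def Let_def)

lemma bw_period: "bw k (t + 2*k*j) = bw k t"
  by (simp add: bw_def)

lemma bw_step: assumes "1 \<le> k" shows "bw k (Suc t) = Suc (bw k t) \<or> bw k t = Suc (bw k (Suc t))"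
proof -
  define r where "r = t mod (2*k)"
  have r: "r < 2*k" using assms by (simp add: r_def)
  have t: "t = 2*k*(t div (2*k)) + r" by (simp add: r_def)
  show ?thesis
  proof (cases "Suc r = 2*k")
    case True
    have "Suc t = 2*k*(Suc (t div (2*k)))" using t True by simp
    then have "bw k (Suc t) = 0" by (simp add: bw_def)
    moreover have "bw k t = 1" using bw_blk[OF assms, of r "t div (2*k)"] r t True assms by (simp add: min_def, arith)
    ultimately show ?thesis by simp
  next
    case False
    have "Suc t = 2*k*(t div (2*k)) + Suc r" using t by simp
    then have a: "bw k (Suc t) = min (Suc r) (2*k - Suc r)" using bw_blk[OF assms, of "Suc r" "t div (2*k)"] r False by simp
    have b: "bw k t = min r (2*k - r)" using bw_blk[OF assms, of r "t div (2*k)"] r t by simp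
    show ?thesis using a b r False by (simp add: min_def) presburger
  qed
qed

section \<open>Pointer model\<close>

fun pfl :: "(nat \<Rightarrow> nat) \<Rightarrow> nat \<Rightarrow> nat list \<Rightarrow> nat" where
  "pfl f a [] = 0"
| "pfl f a (r # rs) = (if r = a then Suc (pfl f (f a) rs) else pfl f a rs)"

fun pst :: "(nat \<Rightarrow> nat) \<Rightarrow> nat \<Rightarrow> nat list \<Rightarrow> nat" where
  "pst f a [] = a"
| "pst f a (r # rs) = (if r = a then pst f (f a) rs else pst f a rs)"

lemma pfl_append: "pfl f a (xs @ ys) = pfl f a xs + pfl f (pst f a xs) ys"
  by (induction xs arbitrary: a) auto
lemma pst_append: "pst f a (xs @ ys) = pst f (pst f a xs) ys"
  by (induction xs arbitrary: a) auto
lemma pfl_le: "pfl f a xs \<le> length xs"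
  by (induction xs arbitrary: a) (auto intro: le_SucI)
lemma pfl_nohit: "a \<notin> set xs \<Longrightarrow> pfl f a xs = 0 \<and> pst f a xs = a"
  by (induction xs) auto

lemma upt_split3: "t0 \<le> t1 \<Longrightarrow> t1 < e \<Longrightarrow> [t0..<e] = [t0..<t1] @ t1 # [Suc t1..<e]"
proof -
  assume a: "t0 \<le> t1" "t1 < e"
  have "[t0..<e] = [t0..<t1] @ [t1..<e]" using upt_add_eq_append[of t0 t1 "e - t1"] a by simp
  then show ?thesis using upt_conv_Cons[of t1 e] a by simp
qed

lemma seg_hit:
  assumes "t0 \<le> t1" "t1 < e" "\<And>t. t0 \<le> t \<Longrightarrow> t < t1 \<Longrightarrow> g t \<noteq> a" "g t1 = a"
  shows "pfl f a (map g [t0..<e]) = Suc (pfl f (f a) (map g [Suc t1..<e]))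
       \<and> pst f a (map g [t0..<e]) = pst f (f a) (map g [Suc t1..<e])"
proof -
  have na: "a \<notin> set (map g [t0..<t1])"
  proof
    assume "a \<in> set (map g [t0..<t1])"
    then obtain t where "t0 \<le> t" "t < t1" "g t = a" by auto
    then show False using assms(3) by blast
  qed
  show ?thesis using upt_split3[OF assms(1,2)] pfl_nohit[OF na, of f] assms(4)
    by (simp add: pfl_append pst_append)
qed

definition cycl :: "(nat \<Rightarrow> nat) \<Rightarrow> nat list \<Rightarrow> bool" where
  "cycl f L \<longleftrightarrow> (\<forall>i<length L. f (L ! i) = L ! (Suc i mod length L))"

lemma cycl_rotate1: "cycl f L \<Longrightarrow> cycl f (rotate1 L)"
  unfolding cycl_def
proof (intro allI impI)
  fix i assume c: "\<forall>i<length L. f (L ! i) = L ! (Suc i mod length L)" and i: "i < length (rotate1 L)"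
  have n: "length L > 0" using i by (cases L) auto
  have "f (rotate1 L ! i) = f (L ! (Suc i mod length L))" using i by (simp add: nth_rotate1)
  also have "\<dots> = L ! (Suc (Suc i mod length L) mod length L)" using c n by simp
  also have "\<dots> = L ! (Suc (Suc i) mod length L)" by (simp add: mod_Suc_eq)
  also have "\<dots> = rotate1 L ! (Suc i mod length L)" using n by (simp add: nth_rotate1 mod_Suc_eq)
  finally show "f (rotate1 L ! i) = rotate1 L ! (Suc i mod length (rotate1 L))" by simp
qed

lemma fifo_ptr:
  "length q = k \<Longrightarrow> 1 \<le> k \<Longrightarrow> distinct (q @ [b]) \<Longrightarrow> cycl f (q @ [b]) \<Longrightarrow> set rs \<subseteq> set (q @ [b])
   \<Longrightarrow> fifo_faults k q rs = pfl f b rs"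
proof (induction rs arbitrary: q b)
  case Nil then show ?case by simp
next
  case (Cons r rs)
  show ?case
  proof (cases "r \<in> set q")
    case True
    then have "r \<noteq> b" using Cons.prems by auto
    then show ?thesis using True Cons by auto
  next
    case False
    then have rb: "r = b" using Cons.prems by auto
    have qne: "q \<noteq> []" using Cons.prems by auto
    have rot: "rotate1 (q @ [b]) = tl q @ [b] @ [hd q]" using qne by (cases q) auto
    have fb: "f b = hd q"
    proof -
      have "f ((q @ [b]) ! k) = (q @ [b]) ! (Suc k mod length (q @ [b]))"
        using Cons.prems unfolding cycl_def by auto
      then show ?thesis using Cons.prems qne by (simp add: nth_append hd_conv_nth)
    qed
    have IH: "fifo_faults k (tl q @ [b]) rs = pfl f (hd q) rs"
    proof (rule Cons.IH)
      show "length (tl q @ [b]) = k" using Cons.prems qne by simp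
      show "distinct ((tl q @ [b]) @ [hd q])" using Cons.prems rot by (metis append_assoc distinct1_rotate)
      show "cycl f ((tl q @ [b]) @ [hd q])" using cycl_rotate1[OF Cons.prems(4)] rot by simp
      have "set (tl q @ [b] @ [hd q]) = set (q @ [b])" using rot by (metis set_rotate1)
      then show "set rs \<subseteq> set ((tl q @ [b]) @ [hd q])" using Cons.prems by auto
    qed (rule Cons.prems(2))
    show ?thesis using False rb IH fb Cons.prems by simp
  qed
qed

section \<open>The zigzag order\<close>

definition cc :: "nat \<Rightarrow> nat" where "cc k = (k + 1) div 2"

definition sg :: "nat \<Rightarrow> nat \<Rightarrow> nat" where
  "sg k j = (if even j then cc k + j div 2 else cc k - (j + 1) div 2)"

definition nxt :: "nat \<Rightarrow> nat \<Rightarrow> nat" where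
  "nxt k x = (if x < cc k then (if 2 * cc k - x \<le> k then 2 * cc k - x else cc k)
              else (if x + 1 \<le> 2 * cc k then 2 * cc k - 1 - x else cc k))"

lemma nxt_sg: "j < k \<Longrightarrow> nxt k (sg k j) = sg k (Suc j)"
proof (cases "even j")
  case True
  assume "j < k"
  then obtain i where i: "j = 2*i" using True by auto
  have "2*i < k" using \<open>j<k\<close> i by simp
  then show ?thesis using i by (simp add: nxt_def sg_def cc_def)
next
  case False
  assume "j < k"
  then obtain i where i: "j = 2*i+1" using False by (metis oddE)
  have "2*i+1 < k" using \<open>j<k\<close> i by simp
  then show ?thesis using i by (simp add: nxt_def sg_def cc_def)
qed

lemma nxt_sg_last: "1 \<le> k \<Longrightarrow> nxt k (sg k k) = sg k 0"
  by (cases "even k") (auto simp: nxt_def sg_def cc_def elim!: evenE oddE)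

lemma cycl_sg: "1 \<le> k \<Longrightarrow> cycl (nxt k) (map (sg k) [0..<Suc k])"
  unfolding cycl_def
proof (intro allI impI)
  fix i assume k: "1 \<le> k" and i: "i < length (map (sg k) [0..<Suc k])"
  then have i': "i \<le> k" by simp
  show "nxt k (map (sg k) [0..<Suc k] ! i) = map (sg k) [0..<Suc k] ! (Suc i mod length (map (sg k) [0..<Suc k]))"
  proof (cases "i = k")
    case True
    then show ?thesis using nxt_sg_last[OF k] by (simp del: upt_Suc)
  next
    case False
    then have "i < k" using i' by simp
    then show ?thesis using nxt_sg[of i k] by (simp del: upt_Suc add: nth_append)
  qed
qed



lemma map_upt_shift: "map g [d + a..<d + b] = map (\<lambda>t. g (d + t)) [a..<b]"
  by (rule nth_equalityI) (auto simp: ac_simps)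

lemma upt_split: "a \<le> b \<Longrightarrow> b \<le> c \<Longrightarrow> [a..<c] = [a..<b] @ [b..<c]"
  using upt_add_eq_append[of a b "c - b"] by simp

lemma fifo_hits: "set xs \<subseteq> set q \<Longrightarrow> fifo_st k q xs = q \<and> fifo_faults k q xs = 0"
  by (induction xs) auto

lemma fifo_load_step: "length q < k \<Longrightarrow> set xs \<subseteq> set q \<Longrightarrow> y \<notin> set q \<Longrightarrow>
  fifo_st k q (xs @ [y]) = q @ [y]"
  using fifo_hits[of xs q k] by (simp add: fifo_st_append)

definition seg :: "nat \<Rightarrow> nat \<Rightarrow> nat list" where
  "seg a b = (if b < a then rev [b..<a] else [Suc a..<Suc b])"

fun zl :: "nat \<Rightarrow> nat \<Rightarrow> nat list" where
  "zl k 0 = [cc k]"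
| "zl k (Suc j) = zl k j @ seg (sg k j) (sg k (Suc j))"

lemma seg_split:
  assumes "lo \<le> a" "a \<le> hi" "Suc b = lo \<or> b = Suc hi"
  shows "\<exists>xs. seg a b = xs @ [b] \<and> set xs \<subseteq> {lo..hi} \<and> b \<notin> {lo..hi}"
proof (cases "b < a")
  case True
  have "[b..<a] = b # [Suc b..<a]" using True by (simp add: upt_conv_Cons)
  then have "seg a b = rev [Suc b..<a] @ [b]" using True by (simp add: seg_def)
  then show ?thesis using assms True by (intro exI[of _ "rev [Suc b..<a]"]) auto
next
  case False
  then have ab: "a < b" using assms by auto
  have "[Suc a..<Suc b] = [Suc a..<b] @ [b]" using ab by simp
  then have "seg a b = [Suc a..<b] @ [b]" using False by (simp add: seg_def)
  then show ?thesis using assms ab by (intro exI[of _ "[Suc a..<b]"]) auto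
qed

lemma sg_set: "j \<le> k \<Longrightarrow> set (map (sg k) [0..<Suc j]) = {cc k - Suc j div 2 .. cc k + j div 2}"
proof (induction j)
  case 0 then show ?case by (simp add: sg_def)
next
  case (Suc j)
  have IH: "set (map (sg k) [0..<Suc j]) = {cc k - Suc j div 2 .. cc k + j div 2}" using Suc by simp
  have "set (map (sg k) [0..<Suc (Suc j)]) = insert (sg k (Suc j)) (set (map (sg k) [0..<Suc j]))"
    by auto
  also have "\<dots> = {cc k - Suc (Suc j) div 2 .. cc k + Suc j div 2}"
    unfolding IH
  proof (cases "even j")
    case True
    have h: "Suc j div 2 = j div 2" "Suc (Suc j) div 2 = Suc (j div 2)" using True by presburger+
    have "Suc (j div 2) \<le> cc k" using Suc.prems True unfolding cc_def by presburger
    then show "insert (sg k (Suc j)) {cc k - Suc j div 2..cc k + j div 2} = {cc k - Suc (Suc j) div 2..cc k + Suc j div 2}"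
      using True h by (auto simp: sg_def)
  next
    case False
    have h: "Suc j div 2 = Suc (j div 2)" "Suc (Suc j) div 2 = Suc (j div 2)" using False by presburger+
    show "insert (sg k (Suc j)) {cc k - Suc j div 2..cc k + j div 2} = {cc k - Suc (Suc j) div 2..cc k + Suc j div 2}"
      using False h by (auto simp: sg_def)
  qed
  finally show ?case .
qed

lemma sg_all: "set (map (sg k) [0..<Suc k]) = {0..k}"
proof -
  have "cc k - Suc k div 2 = 0" "cc k + k div 2 = k" unfolding cc_def by presburger+
  then show ?thesis using sg_set[of k k] by simp
qed

lemma sg_distinct: "distinct (map (sg k) [0..<Suc k])"
proof (rule card_distinct)
  have "card (set (map (sg k) [0..<Suc k])) = card {0..k}" by (simp only: sg_all)
  then show "card (set (map (sg k) [0..<Suc k])) = length (map (sg k) [0..<Suc k])" by simp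
qed

lemma fifo_zl: "j < k \<Longrightarrow> fifo_st k [] (zl k j) = map (sg k) [0..<Suc j]"
proof (induction j)
  case 0 then show ?case by (simp add: sg_def)
next
  case (Suc j)
  have IH: "fifo_st k [] (zl k j) = map (sg k) [0..<Suc j]" using Suc by simp
  let ?lo = "cc k - Suc j div 2" and ?hi = "cc k + j div 2"
  have S: "set (map (sg k) [0..<Suc j]) = {?lo..?hi}" using sg_set[of j k] Suc.prems by simp
  have a0: "sg k j \<in> set (map (sg k) [0..<Suc j])" by simp
  have a: "sg k j \<in> {?lo..?hi}" using a0 unfolding S .
  have b: "Suc (sg k (Suc j)) = ?lo \<or> sg k (Suc j) = Suc ?hi"
  proof (cases "even j")
    case True
    have "Suc (j div 2) \<le> cc k" using Suc.prems True unfolding cc_def by presburger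
    then show ?thesis using True by (simp add: sg_def; presburger)
  next
    case False then show ?thesis by (simp add: sg_def; presburger)
  qed
  obtain xs where xs: "seg (sg k j) (sg k (Suc j)) = xs @ [sg k (Suc j)]" "set xs \<subseteq> {?lo..?hi}"
    "sg k (Suc j) \<notin> {?lo..?hi}"
    using seg_split[of ?lo "sg k j" ?hi "sg k (Suc j)"] a b by auto
  have "fifo_st k [] (zl k (Suc j)) = fifo_st k (map (sg k) [0..<Suc j]) (xs @ [sg k (Suc j)])"
    using IH xs by (simp add: fifo_st_append)
  also have "\<dots> = map (sg k) [0..<Suc j] @ [sg k (Suc j)]"
  proof (rule fifo_load_step)
    show "length (map (sg k) [0..<Suc j]) < k" using Suc.prems by simp
    show "set xs \<subseteq> set (map (sg k) [0..<Suc j])" by (simp only: S) (rule xs(2))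
    show "sg k (Suc j) \<notin> set (map (sg k) [0..<Suc j])" by (simp only: S) (rule xs(3))
  qed
  finally show ?case by simp
qed

section \<open>Walks\<close>

fun nwalk :: "nat list \<Rightarrow> bool" where
  "nwalk (x # y # zs) = ((y = Suc x \<or> x = Suc y) \<and> nwalk (y # zs))"
| "nwalk _ = True"

lemma nwalk_join: "nwalk (xs @ [a]) \<Longrightarrow> nwalk (a # ys) \<Longrightarrow> nwalk (xs @ a # ys)"
proof (induction xs)
  case Nil then show ?case by simp
next
  case (Cons x xs)
  then show ?case by (cases xs) auto
qed

lemma nwalk_join2: "nwalk xs \<Longrightarrow> xs \<noteq> [] \<Longrightarrow> nwalk (last xs # ys) \<Longrightarrow> nwalk (xs @ ys)"
proof -
  assume a: "nwalk xs" "xs \<noteq> []" "nwalk (last xs # ys)"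
  have e: "xs = butlast xs @ [last xs]" using a by simp
  have "nwalk (butlast xs @ last xs # ys)" using nwalk_join[of "butlast xs" "last xs" ys] a e by simp
  then show ?thesis using e by (metis append.assoc append_Cons append_Nil)
qed

lemma nwalk_snoc: "nwalk xs \<Longrightarrow> xs \<noteq> [] \<Longrightarrow> (y = Suc (last xs) \<or> last xs = Suc y) \<Longrightarrow> nwalk (xs @ [y])"
  by (rule nwalk_join2) auto

lemma nwalk_rev: "nwalk xs \<Longrightarrow> nwalk (rev xs)"
proof (induction xs rule: nwalk.induct)
  case (1 x y zs)
  have "nwalk (rev (y # zs))" using 1 by simp
  then have "nwalk (rev (y # zs) @ [x])" using 1 by (intro nwalk_snoc) auto
  then show ?case by simp
qed auto

lemma nwalk_upt: "nwalk [a..<b]"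
proof (induction b)
  case 0 then show ?case by simp
next
  case (Suc b)
  show ?case
  proof (cases "a < b")
    case True
    then have "[a..<Suc b] = [a..<b] @ [b]" by simp
    moreover have "nwalk ([a..<b] @ [b])"
    proof (rule nwalk_snoc)
      show "nwalk [a..<b]" using Suc by simp
      show "[a..<b] \<noteq> []" using True by simp
      show "b = Suc (last [a..<b]) \<or> last [a..<b] = Suc b" using True by (simp add: last_upt)
    qed
    ultimately show ?thesis by simp
  next
    case False
    then show ?thesis by (cases "a = b") auto
  qed
qed

lemma nwalk_seg: "nwalk (a # seg a b)"
proof (cases "b < a")
  case True
  have e: "a # rev [b..<a] = rev [b..<Suc a]" using True by simp
  have "nwalk (rev [b..<Suc a])" by (rule nwalk_rev[OF nwalk_upt])
  then show ?thesis using True e by (metis seg_def)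
next
  case False
  have e: "a # [Suc a..<Suc b] = [a..<Suc b]" using False by (simp add: upt_conv_Cons)
  show ?thesis using False e nwalk_upt[of a "Suc b"] by (metis seg_def)
qed

lemma seg_ne: "a \<noteq> b \<Longrightarrow> seg a b \<noteq> [] \<and> last (seg a b) = b"
  by (auto simp: seg_def last_rev hd_upt last_upt)

lemma sg_neq: "Suc j \<le> k \<Longrightarrow> sg k j \<noteq> sg k (Suc j)"
  using sg_distinct[of k] by (auto simp: nth_eq_iff_index_eq simp del: upt_Suc
    dest: nth_eq_iff_index_eq[of "map (sg k) [0..<Suc k]" j "Suc j"])

lemma sg_le: "j \<le> k \<Longrightarrow> sg k j \<le> k"
proof (cases "even j")
  case True
  assume "j \<le> k"
  then have "cc k + j div 2 \<le> k" unfolding cc_def using True by presburger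
  then show ?thesis using True by (simp add: sg_def)
next
  case False
  have "cc k \<le> k" unfolding cc_def by presburger
  then show ?thesis using False by (simp add: sg_def)
qed

lemma zl_walk: "j \<le> k \<Longrightarrow> nwalk (zl k j) \<and> zl k j \<noteq> [] \<and> last (zl k j) = sg k j \<and> set (zl k j) \<subseteq> {0..k}"
proof (induction j)
  case 0 then show ?case by (simp add: sg_def cc_def)
next
  case (Suc j)
  then have IH: "nwalk (zl k j)" "zl k j \<noteq> []" "last (zl k j) = sg k j" "set (zl k j) \<subseteq> {0..k}" by auto
  have ne: "sg k j \<noteq> sg k (Suc j)" using sg_neq Suc.prems by blast
  have w: "nwalk (zl k (Suc j))"
    using nwalk_join2[OF IH(1,2)] IH(3) nwalk_seg by simp
  have sgk: "sg k (Suc j) \<le> k" "sg k j \<le> k" using Suc.prems by (auto intro: sg_le)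
  have "set (seg (sg k j) (sg k (Suc j))) \<subseteq> {0..k}" using sgk by (auto simp: seg_def)
  then show ?case using w IH seg_ne[OF ne] by auto
qed

lemma nwalk_map_upt: "(\<And>t. g (Suc t) = Suc (g t) \<or> g t = Suc (g (Suc t))) \<Longrightarrow> nwalk (map g [a..<b])"
proof (induction b)
  case 0 then show ?case by simp
next
  case (Suc b)
  show ?case
  proof (cases "a < b")
    case True
    then have "map g [a..<Suc b] = map g [a..<b] @ [g b]" by simp
    moreover have "nwalk (map g [a..<b] @ [g b])"
    proof (rule nwalk_snoc)
      show "nwalk (map g [a..<b])" using Suc by simp
      show "map g [a..<b] \<noteq> []" using True by simp
      have l: "last (map g [a..<b]) = g (b - 1)" using True by (simp add: last_map last_upt)
      have "b = Suc (b - 1)" using True by simp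
      then show "g b = Suc (last (map g [a..<b])) \<or> last (map g [a..<b]) = Suc (g b)"
        using Suc.prems[of "b - 1"] l by metis
    qed
    ultimately show ?thesis by simp
  next
    case False
    then show ?thesis by (cases "a = b") auto
  qed
qed

lemma nwalk_nth: "nwalk xs \<Longrightarrow> Suc i < length xs \<Longrightarrow> xs ! Suc i = Suc (xs ! i) \<or> xs ! i = Suc (xs ! Suc i)"
proof (induction xs arbitrary: i rule: nwalk.induct)
  case (1 x y zs)
  then show ?case by (cases i) auto
qed auto

lemma respects_path:
  assumes "length p = Suc k" "set p \<subseteq> V" "\<And>i. Suc i < length p \<Longrightarrow> E (p ! i) (p ! Suc i)"
    "\<And>x y. E x y \<Longrightarrow> E y x" "nwalk xs" "set xs \<subseteq> {0..k}"
  shows "respects_graph V E (map ((!) p) xs)"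
  unfolding respects_graph_def
proof (intro conjI allI impI)
  show "set (map ((!) p) xs) \<subseteq> V"
  proof
    fix x assume "x \<in> set (map ((!) p) xs)"
    then obtain y where "y \<in> set xs" "x = p ! y" by auto
    then have "y < length p" using assms(1,6) by auto
    then show "x \<in> V" using assms(2) \<open>x = p ! y\<close> nth_mem by blast
  qed
next
  fix i assume i: "Suc i < length (map ((!) p) xs)"
  have lt: "xs ! Suc i \<le> k" "xs ! i \<le> k" using i assms(6) by (auto simp: subset_iff)
  from nwalk_nth[OF assms(5)] i consider "xs ! Suc i = Suc (xs ! i)" | "xs ! i = Suc (xs ! Suc i)" by auto
  then show "map ((!) p) xs ! i = map ((!) p) xs ! Suc i \<or> E (map ((!) p) xs ! i) (map ((!) p) xs ! Suc i)"
  proof cases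
    case 1
    have "E (p ! (xs ! i)) (p ! Suc (xs ! i))" using lt 1 assms(1) by (intro assms(3)) simp
    then show ?thesis using i 1 by simp
  next
    case 2
    have "E (p ! (xs ! Suc i)) (p ! Suc (xs ! Suc i))" using lt 2 assms(1) by (intro assms(3)) simp
    then have "E (p ! (xs ! i)) (p ! (xs ! Suc i))" using 2 assms(4) by metis
    then show ?thesis using i by simp
  qed
qed



lemma fwf_gen: "fwf_st k C xs = C \<union> set xs \<or> (\<exists>j<length xs. fwf_st k C xs = set (drop j xs))"
proof (induction xs arbitrary: C)
  case Nil then show ?case by simp
next
  case (Cons x xs)
  show ?case
  proof (cases "x \<in> C")
    case True
    from Cons.IH[of C] show ?thesis
    proof
      assume "fwf_st k C xs = C \<union> set xs" then show ?thesis using True by auto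
    next
      assume "\<exists>j<length xs. fwf_st k C xs = set (drop j xs)"
      then obtain j where "j < length xs" "fwf_st k C xs = set (drop j xs)" by auto
      then show ?thesis using True by (intro disjI2 exI[of _ "Suc j"]) auto
    qed
  next
    case xC: False
    show ?thesis
    proof (cases "card C < k")
      case True
      from Cons.IH[of "insert x C"] show ?thesis
      proof
        assume "fwf_st k (insert x C) xs = insert x C \<union> set xs" then show ?thesis using True xC by auto
      next
        assume "\<exists>j<length xs. fwf_st k (insert x C) xs = set (drop j xs)"
        then obtain j where "j < length xs" "fwf_st k (insert x C) xs = set (drop j xs)" by auto
        then show ?thesis using True xC by (intro disjI2 exI[of _ "Suc j"]) auto
      qed
    next
      case False
      from Cons.IH[of "{x}"] show ?thesis
      proof
        assume "fwf_st k {x} xs = {x} \<union> set xs" then show ?thesis using False xC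
          by (intro disjI2 exI[of _ 0]) auto
      next
        assume "\<exists>j<length xs. fwf_st k {x} xs = set (drop j xs)"
        then obtain j where "j < length xs" "fwf_st k {x} xs = set (drop j xs)" by auto
        then show ?thesis using False xC by (intro disjI2 exI[of _ "Suc j"]) auto
      qed
    qed
  qed
qed

lemma fwf_inv: "1 \<le> k \<Longrightarrow> finite C \<Longrightarrow> card C \<le> k \<Longrightarrow> finite (fwf_st k C xs) \<and> card (fwf_st k C xs) \<le> k"
proof (induction xs arbitrary: C)
  case Nil then show ?case by simp
next
  case (Cons x xs)
  show ?case
  proof (cases "x \<in> C")
    case True then show ?thesis using Cons by simp
  next
    case False
    show ?thesis
    proof (cases "card C < k")
      case True
      then show ?thesis using Cons.IH[of "insert x C"] Cons.prems False by simp
    next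
      case F: False
      then show ?thesis using Cons.IH[of "{x}"] Cons.prems False by simp
    qed
  qed
qed

lemma fwf_noflush: "finite C \<Longrightarrow> card (C \<union> set xs) \<le> k \<Longrightarrow>
   fwf_st k C xs = C \<union> set xs \<and> fwf_faults k C xs = card (set xs - C)"
proof (induction xs arbitrary: C)
  case Nil then show ?case by simp
next
  case (Cons x xs)
  show ?case
  proof (cases "x \<in> C")
    case True
    have "set (x # xs) - C = set xs - C" using True by auto
    then show ?thesis using Cons True by (simp add: insert_absorb)
  next
    case False
    have "card (insert x C) \<le> card (C \<union> set (x # xs))" using Cons.prems by (intro card_mono) auto
    then have ck: "card C < k" using Cons.prems False by simp
    have e: "insert x C \<union> set xs = C \<union> set (x # xs)" by auto
    have IH: "fwf_st k (insert x C) xs = insert x C \<union> set xs \<and>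
      fwf_faults k (insert x C) xs = card (set xs - insert x C)"
      using Cons.prems e by (intro Cons.IH) auto
    have "set (x # xs) - C = insert x (set xs - insert x C)" using False by auto
    then have "card (set (x # xs) - C) = Suc (card (set xs - insert x C))" by simp
    then show ?thesis using IH False ck e by simp
  qed
qed

lemma bw_low: "1 \<le> k \<Longrightarrow> t \<le> k \<Longrightarrow> bw k t = t"
  using bw_blk[of k t 0] by simp

lemma bw_high: "1 \<le> k \<Longrightarrow> k \<le> t \<Longrightarrow> t \<le> 2*k \<Longrightarrow> bw k t = 2*k - t"
  using bw_blk[of k t 0] by simp

lemma PL_split: "1 \<le> k \<Longrightarrow> map (bw k) [0..<2*k] = [0..<Suc k] @ map (bw k) [Suc k..<2*k]"
proof -
  assume k: "1 \<le> k"
  have "[0..<2*k] = [0..<Suc k] @ [Suc k..<2*k]" using k by (intro upt_split) auto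
  moreover have "map (bw k) [0..<Suc k] = [0..<Suc k]"
    by (rule nth_equalityI) (simp_all add: bw_low[OF k] del: upt_Suc)
  ultimately show ?thesis by simp
qed

lemma D_set: "1 \<le> k \<Longrightarrow> set (map (bw k) [Suc k..<2*k]) = {1..<k}"
proof -
  assume k: "1 \<le> k"
  show ?thesis
  proof
    show "set (map (bw k) [Suc k..<2*k]) \<subseteq> {1..<k}"
    proof
      fix x assume "x \<in> set (map (bw k) [Suc k..<2*k])"
      then obtain t where t: "Suc k \<le> t" "t < 2*k" "x = bw k t" by auto
      then have "x = 2*k - t" using bw_high[OF k, of t] by simp
      then show "x \<in> {1..<k}" using t by auto
    qed
    show "{1..<k} \<subseteq> set (map (bw k) [Suc k..<2*k])"
    proof
      fix x assume x: "x \<in> {1..<k}"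
      have "bw k (2*k - x) = x" using x bw_high[OF k, of "2*k - x"] by auto
      moreover have "2*k - x \<in> {Suc k..<2*k}" using x by auto
      ultimately show "x \<in> set (map (bw k) [Suc k..<2*k])" unfolding set_map
        by (intro image_eqI[where x="2*k - x"]) auto
    qed
  qed
qed

lemma fwf_period_st:
  assumes k: "1 \<le> k" and C: "finite C" "card C \<le> k"
  shows "fwf_st k C (map (bw k) [0..<2*k]) = {1..k}"
proof -
  let ?D = "map (bw k) [Suc k..<2*k]"
  define C1 where "C1 = fwf_st k C [0..<Suc k]"
  have inv0: "finite C1 \<and> card C1 \<le> k" unfolding C1_def by (rule fwf_inv[OF k C])
  have inv: "finite C1" "card C1 \<le> k" using inv0 by blast+
  from fwf_gen[of k C "[0..<Suc k]"] obtain j where j: "j < Suc k" "C1 = {j..k}"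
  proof
    assume h: "fwf_st k C [0..<Suc k] = C \<union> set [0..<Suc k]"
    have "set [0..<Suc k] \<subseteq> C1" unfolding C1_def h by (rule Un_upper2)
    then have "card (set [0..<Suc k]) \<le> card C1" by (rule card_mono[OF inv(1)])
    moreover have "card (set [0..<Suc k]) = Suc k" by (simp only: distinct_card distinct_upt length_upt)
    ultimately show ?thesis using inv(2) by linarith
  next
    assume "\<exists>j<length [0..<Suc k]. fwf_st k C [0..<Suc k] = set (drop j [0..<Suc k])"
    then obtain j where j: "j < length [0..<Suc k]" "fwf_st k C [0..<Suc k] = set (drop j [0..<Suc k])"
      by blast
    have "set (drop j [0..<Suc k]) = {j..k}" by (simp del: upt_Suc add: atLeastLessThanSuc_atLeastAtMost)
    then have "C1 = {j..k}" using j(2) unfolding C1_def by simp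
    moreover have "j < Suc k" using j(1) by simp
    ultimately show ?thesis by (rule that[rotated])
  qed
  have j1: "1 \<le> j"
  proof (rule ccontr)
    assume "\<not> 1 \<le> j" then have "C1 = {0..k}" using j by simp
    then show False using inv by simp
  qed
  have U: "C1 \<union> set ?D = {1..k}" using j j1 D_set[OF k] by auto
  have cu: "card (C1 \<union> set ?D) \<le> k" unfolding U by simp
  have n: "fwf_st k C1 ?D = C1 \<union> set ?D" using fwf_noflush[OF inv(1) cu] by blast
  have e: "fwf_st k C (map (bw k) [0..<2*k]) = fwf_st k C1 ?D"
    unfolding C1_def PL_split[OF k] fwf_st_append ..
  show ?thesis using e n U by simp
qed

lemma fwf_period_faults:
  assumes k: "1 \<le> k"
  shows "fwf_faults k {1..k} (map (bw k) [0..<2*k]) = 2*k"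
proof -
  let ?D = "map (bw k) [Suc k..<2*k]"
  have A: "[0..<Suc k] = [0] @ [1..<k] @ [k]" using k by (simp add: upt_conv_Cons)
  have f1: "fwf_faults k {1..k} [0] = 1" "fwf_st k {1..k} [0] = {0}" by auto
  have u2: "{0} \<union> set [1..<k] = {0..<k}" using k by auto
  have n2': "fwf_st k {0} [1..<k] = {0} \<union> set [1..<k] \<and> fwf_faults k {0} [1..<k] = card (set [1..<k] - {0})"
    by (rule fwf_noflush) (use u2 in simp_all)
  have n2: "fwf_st k {0} [1..<k] = {0..<k} \<and> fwf_faults k {0} [1..<k] = card (set [1..<k] - {0})"
    using n2' u2 by simp
  have c2: "card (set [1..<k] - {0}) = k - 1" by simp
  have f3: "fwf_faults k {0..<k} [k] = 1" "fwf_st k {0..<k} [k] = {k}" by auto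
  have u4: "{k} \<union> set ?D = {1..k}" using D_set[OF k] k by auto
  have n4: "fwf_st k {k} ?D = {k} \<union> set ?D \<and> fwf_faults k {k} ?D = card (set ?D - {k})"
    by (rule fwf_noflush) (use u4 in simp_all)
  have c4: "card (set ?D - {k}) = k - 1" using D_set[OF k] by simp
  have L: "map (bw k) [0..<2*k] = [0] @ [1..<k] @ [k] @ ?D" using PL_split[OF k] A by simp
  have "fwf_faults k {1..k} ([0] @ [1..<k] @ [k] @ ?D) = 1 + ((k - 1) + (1 + (k - 1)))"
    using f1 n2 c2 f3 n4 c4 by (simp only: fwf_append fwf_st_append)
  then show ?thesis using L k by simp
qed

lemma period_shift: "map (bw k) [2*k*j..<2*k*j + 2*k] = map (bw k) [0..<2*k]"
proof -
  have "map (bw k) [2*k*j + 0..<2*k*j + 2*k] = map (\<lambda>t. bw k (2*k*j + t)) [0..<2*k]"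
    by (rule map_upt_shift)
  also have "\<dots> = map (bw k) [0..<2*k]" using bw_period[of k _ j] by (simp add: add.commute)
  finally show ?thesis by simp
qed

lemma fwf_periods:
  assumes k: "1 \<le> k"
  shows "fwf_faults k {1..k} (map (bw k) [2*k*j..<2*k*j + 2*k*P]) = 2*k*P
       \<and> fwf_st k {1..k} (map (bw k) [2*k*j..<2*k*j + 2*k*P]) = {1..k}"
proof (induction P arbitrary: j)
  case 0 then show ?case by simp
next
  case (Suc P)
  have sp: "[2*k*j..<2*k*j + 2*k*Suc P] = [2*k*j..<2*k*j + 2*k] @ [2*k*Suc j..<2*k*Suc j + 2*k*P]"
  proof -
    have e1: "2*k*Suc j = 2*k*j + 2*k" by simp
    have e2: "2*k*j + 2*k + 2*k*P = 2*k*j + 2*k*Suc P" by (simp add: algebra_simps)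
    have "[2*k*j..<2*k*j + 2*k*Suc P] = [2*k*j..<2*k*j + 2*k] @ [2*k*j + 2*k..<2*k*j + 2*k*Suc P]"
      by (rule upt_split) auto
    then show ?thesis by (simp only: e1 e2)
  qed
  have p: "fwf_faults k {1..k} (map (bw k) [2*k*j..<2*k*j + 2*k]) = 2*k"
          "fwf_st k {1..k} (map (bw k) [2*k*j..<2*k*j + 2*k]) = {1..k}"
    using period_shift fwf_period_faults[OF k] fwf_period_st[OF k] by auto
  show ?case using Suc.IH[of "Suc j"] p sp by (simp add: fwf_append fwf_st_append algebra_simps)
qed

lemma fwf_periods_any:
  assumes k: "1 \<le> k" and C: "finite C" "card C \<le> k"
  shows "2*k*P \<le> fwf_faults k C (map (bw k) [2*k*j..<2*k*j + 2*k*Suc P])"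
proof -
  have sp: "[2*k*j..<2*k*j + 2*k*Suc P] = [2*k*j..<2*k*j + 2*k] @ [2*k*Suc j..<2*k*Suc j + 2*k*P]"
  proof -
    have e1: "2*k*Suc j = 2*k*j + 2*k" by simp
    have e2: "2*k*j + 2*k + 2*k*P = 2*k*j + 2*k*Suc P" by (simp add: algebra_simps)
    have "[2*k*j..<2*k*j + 2*k*Suc P] = [2*k*j..<2*k*j + 2*k] @ [2*k*j + 2*k..<2*k*j + 2*k*Suc P]"
      by (rule upt_split) auto
    then show ?thesis by (simp only: e1 e2)
  qed
  have st: "fwf_st k C (map (bw k) [2*k*j..<2*k*j + 2*k]) = {1..k}"
    using period_shift fwf_period_st[OF k C] by auto
  show ?thesis using fwf_periods[OF k, of "Suc j" P] st sp by (simp add: fwf_append)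
qed



lemma hit1:
  assumes "t0 \<le> t1" "\<And>t. t0 \<le> t \<Longrightarrow> t < t1 \<Longrightarrow> g t \<noteq> x" "g t1 = x"
  shows "pfl f x (map g [t0..<Suc t1]) = 1 \<and> pst f x (map g [t0..<Suc t1]) = f x"
  using seg_hit[of t0 t1 "Suc t1" g x f] assms by simp

lemma pfl_split:
  assumes "t0 \<le> t1" "t1 \<le> t2"
  shows "pfl f a (map g [t0..<t2]) = pfl f a (map g [t0..<t1]) + pfl f (pst f a (map g [t0..<t1])) (map g [t1..<t2])
    \<and> pst f a (map g [t0..<t2]) = pst f (pst f a (map g [t0..<t1])) (map g [t1..<t2])"
  using upt_split[OF assms] by (simp add: pfl_append pst_append)

lemma bw_asc: "1 \<le> k \<Longrightarrow> d \<le> k \<Longrightarrow> bw k (2*k*j + d) = d"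
  using bw_blk[of k d j] by simp

lemma bw_desc: "1 \<le> k \<Longrightarrow> d \<le> k \<Longrightarrow> bw k (2*k*j + (2*k - d)) = d"
  using bw_blk[of k "2*k - d" j] by simp

lemma two_hit:
  assumes k: "1 \<le> k" and B: "B = 2*k*j" and yj: "y = 0 \<or> 1 \<le> j" and yx: "y \<le> x" and xk: "x \<le> k"
    and zx: "z < x" and fx: "f x = z"
  shows "pfl f x (map (bw k) [B - y + 1..<B + 2*k - z + 1]) = 2
       \<and> pst f x (map (bw k) [B - y + 1..<B + 2*k - z + 1]) = f z"
proof -
  have h1: "pfl f x (map (bw k) [B - y + 1..<Suc (B + x)]) = 1 \<and> pst f x (map (bw k) [B - y + 1..<Suc (B + x)]) = z"
  proof (subst fx[symmetric], rule hit1)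
    show "B - y + 1 \<le> B + x" using zx by simp
    show "bw k (B + x) = x" using bw_asc[OF k xk] B by simp
    fix t assume t: "B - y + 1 \<le> t" "t < B + x"
    show "bw k t \<noteq> x"
    proof (cases "B \<le> t")
      case True
      have "bw k t = bw k (2*k*j + (t - B))" using True B by simp
      also have "\<dots> = t - B" using t True xk by (intro bw_asc k) simp
      finally show ?thesis using t True by simp
    next
      case False
      then have y1: "1 \<le> y" using t by simp
      then have j1: "1 \<le> j" using yj by simp
      have "bw k t = bw k (2*k*j - (B - t))" using False B by simp
      also have "\<dots> = min (B - t) (2*k - (B - t))" using False t xk yx by (intro bw_minus k j1) simp
      also have "\<dots> = B - t" using t yx xk by simp
      finally show ?thesis using t yx by simp
    qed
  qed
  have h2: "pfl f z (map (bw k) [Suc (B + x)..<Suc (B + 2*k - z)]) = 1 \<and> pst f z (map (bw k) [Suc (B + x)..<Suc (B + 2*k - z)]) = f z"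
  proof (rule hit1)
    show "Suc (B + x) \<le> B + 2*k - z" using zx xk by simp
    have "bw k (B + 2*k - z) = bw k (2*k*j + (2*k - z))" using B zx xk by simp
    also have "\<dots> = z" using zx xk by (intro bw_desc k) simp
    finally show "bw k (B + 2*k - z) = z" .
    fix t assume t: "Suc (B + x) \<le> t" "t < B + 2*k - z"
    have "bw k t = bw k (2*k*j + (t - B))" using t B by simp
    also have "\<dots> = min (t - B) (2*k - (t - B))" using t zx xk by (intro bw_blk k) simp
    finally show "bw k t \<noteq> z" using t zx xk by (simp add: min_def; arith)
  qed
  have s: "B - y + 1 \<le> Suc (B + x)" "Suc (B + x) \<le> B + 2*k - z + 1" using zx xk by simp_all
  show ?thesis using pfl_split[OF s, of f x "bw k"] h1 h2 by (simp del: upt_Suc)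
qed

section \<open>Odd cycle\<close>

lemma odd_facts:
  assumes "k = 2*m + 1"
  shows "cc k = m + 1" "\<And>i. i \<le> m \<Longrightarrow> nxt k (m + 1 + i) = m - i"
    "\<And>i. i \<le> m \<Longrightarrow> nxt k (m - i) = (if i < m then m + 2 + i else m + 1)"
  using assms by (auto simp: cc_def nxt_def)

lemma odd_sched:
  assumes k: "k = 2*m + 1"
  shows "i \<le> m \<Longrightarrow> pfl (nxt k) (cc k) (map (bw k) [1..<2*k*(i+1) - (m - i) + 1]) = 2*(i+1)
    \<and> pst (nxt k) (cc k) (map (bw k) [1..<2*k*(i+1) - (m - i) + 1]) = nxt k (m - i)"
proof (induction i)
  case 0
  have "pfl (nxt k) (m + 1) (map (bw k) [0 - 0 + 1..<0 + 2*k - m + 1]) = 2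
      \<and> pst (nxt k) (m + 1) (map (bw k) [0 - 0 + 1..<0 + 2*k - m + 1]) = nxt k m"
    using odd_facts(2)[OF k, of 0] k by (intro two_hit[where j=0]) auto
  then show ?case using odd_facts(1)[OF k] k by (simp del: upt_Suc)
next
  case (Suc i)
  define B where "B = 2*k*(i+1)"
  have k1: "1 \<le> k" using k by simp
  have im: "i < m" using Suc.prems by simp
  have IH: "pfl (nxt k) (cc k) (map (bw k) [1..<B - (m - i) + 1]) = 2*(i+1)
    \<and> pst (nxt k) (cc k) (map (bw k) [1..<B - (m - i) + 1]) = m + 2 + i"
    using Suc.IH im odd_facts(3)[OF k, of i] unfolding B_def by simp
  have E: "2*k*(Suc i + 1) - (m - Suc i) + 1 = B + 2*k - (m - Suc i) + 1" unfolding B_def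
    by (simp add: algebra_simps)
  have TH: "pfl (nxt k) (m + 2 + i) (map (bw k) [B - (m - i) + 1..<B + 2*k - (m - Suc i) + 1]) = 2
      \<and> pst (nxt k) (m + 2 + i) (map (bw k) [B - (m - i) + 1..<B + 2*k - (m - Suc i) + 1]) = nxt k (m - Suc i)"
  proof -
    have "nxt k (m + 2 + i) = m - Suc i" using odd_facts(2)[OF k, of "Suc i"] Suc.prems by simp
    then show ?thesis using k Suc.prems unfolding B_def
      by (intro two_hit[where j="i+1"]) auto
  qed
  have s: "1 \<le> B - (m - i) + 1" "B - (m - i) + 1 \<le> B + 2*k - (m - Suc i) + 1" by simp_all
  show ?case unfolding E using pfl_split[OF s, of "nxt k" "cc k" "bw k"] IH TH by (simp del: upt_Suc)
qed

lemma odd_cycle: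
  assumes k: "k = 2*m + 1"
  shows "pfl (nxt k) (cc k) (map (bw k) [1..<1 + k*(k+1)]) = k + 1
       \<and> pst (nxt k) (cc k) (map (bw k) [1..<1 + k*(k+1)]) = cc k"
proof -
  have e: "2*k*(m+1) - (m - m) + 1 = 1 + k*(k+1)" using k by (simp add: algebra_simps)
  have n0: "nxt k 0 = cc k" using odd_facts(3)[OF k, of m] odd_facts(1)[OF k] by simp
  show ?thesis using odd_sched[OF k, of m] n0 k unfolding e by (simp del: upt_Suc)
qed

section \<open>Even cycle\<close>

lemma even_facts:
  assumes "k = 2*m" "1 \<le> m"
  shows "cc k = m" "nxt k m = m - 1" "\<And>i. 1 \<le> i \<Longrightarrow> i \<le> m \<Longrightarrow> nxt k (m - i) = m + i"
    "\<And>i. i < m \<Longrightarrow> nxt k (m + i) = m - i - 1" "nxt k k = m"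
proof -
  have c: "cc k = m" unfolding cc_def using assms by simp
  show "cc k = m" by (rule c)
  show "nxt k m = m - 1" unfolding nxt_def c using assms by simp
  show "\<And>i. 1 \<le> i \<Longrightarrow> i \<le> m \<Longrightarrow> nxt k (m - i) = m + i" unfolding nxt_def c using assms by simp
  show "\<And>i. i < m \<Longrightarrow> nxt k (m + i) = m - i - 1" unfolding nxt_def c using assms by simp
  show "nxt k k = m" unfolding nxt_def c using assms by simp
qed

lemma even_sched:
  assumes k: "k = 2*m" and m1: "1 \<le> m"
  shows "1 \<le> i \<Longrightarrow> i \<le> m \<Longrightarrow> pfl (nxt k) (cc k) (map (bw k) [k+1..<2*k*i - (m - i) + 1]) = 2*i
    \<and> pst (nxt k) (cc k) (map (bw k) [k+1..<2*k*i - (m - i) + 1]) = m + i"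
proof (induction i rule: dec_induct)
  case base
  have k1: "1 \<le> k" using k m1 by simp
  have h1: "pfl (nxt k) m (map (bw k) [k+1..<Suc (2*k - m)]) = 1 \<and> pst (nxt k) m (map (bw k) [k+1..<Suc (2*k - m)]) = nxt k m"
  proof (rule hit1)
    show "k + 1 \<le> 2*k - m" using k m1 by simp
    show "bw k (2*k - m) = m" using bw_high[OF k1, of "2*k - m"] k by simp
    fix t assume "k + 1 \<le> t" "t < 2*k - m"
    then show "bw k t \<noteq> m" using bw_high[OF k1, of t] k by simp
  qed
  have h2: "pfl (nxt k) (m - 1) (map (bw k) [Suc (2*k - m)..<Suc (Suc (2*k - m))]) = 1
     \<and> pst (nxt k) (m - 1) (map (bw k) [Suc (2*k - m)..<Suc (Suc (2*k - m))]) = nxt k (m - 1)"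
  proof (rule hit1)
    show "bw k (Suc (2*k - m)) = m - 1" using bw_high[OF k1, of "Suc (2*k - m)"] k m1 by simp
  qed auto
  have s: "k + 1 \<le> Suc (2*k - m)" "Suc (2*k - m) \<le> Suc (Suc (2*k - m))" using k m1 by simp_all
  have e: "2*k*1 - (m - 1) + 1 = Suc (Suc (2*k - m))" using k m1 by simp
  have n1: "nxt k (m - 1) = m + 1" using even_facts(3)[OF k m1, of 1] m1 by simp
  show ?case unfolding e using pfl_split[OF s, of "nxt k" m "bw k"] h1 h2 even_facts(1,2)[OF k m1] n1 by (simp del: upt_Suc)
next
  case (step i)
  define B where "B = 2*k*i"
  have k1: "1 \<le> k" using k m1 by simp
  have im: "i < m" using step by simp
  have IH: "pfl (nxt k) (cc k) (map (bw k) [k+1..<B - (m - i) + 1]) = 2*i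
    \<and> pst (nxt k) (cc k) (map (bw k) [k+1..<B - (m - i) + 1]) = m + i"
    using step im unfolding B_def by simp
  have E: "2*k*(Suc i) - (m - Suc i) + 1 = B + 2*k - (m - Suc i) + 1" unfolding B_def
    by (simp add: algebra_simps)
  have TH: "pfl (nxt k) (m + i) (map (bw k) [B - (m - i) + 1..<B + 2*k - (m - Suc i) + 1]) = 2
      \<and> pst (nxt k) (m + i) (map (bw k) [B - (m - i) + 1..<B + 2*k - (m - Suc i) + 1]) = nxt k (m - Suc i)"
  proof -
    have "nxt k (m + i) = m - Suc i" using even_facts(4)[OF k m1, of i] im by simp
    then show ?thesis using k im step.hyps unfolding B_def
      by (intro two_hit[where j="i"]) auto
  qed
  have n: "nxt k (m - Suc i) = m + Suc i" using even_facts(3)[OF k m1, of "Suc i"] im by simp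
  have B2: "2*k \<le> B" using step.hyps(1) unfolding B_def by simp
  have s: "k + 1 \<le> B - (m - i) + 1" "B - (m - i) + 1 \<le> B + 2*k - (m - Suc i) + 1"
    using B2 k by simp_all
  show ?case unfolding E using pfl_split[OF s, of "nxt k" "cc k" "bw k"] IH TH n by (simp del: upt_Suc)
qed

lemma even_cycle:
  assumes k: "k = 2*m" and m1: "1 \<le> m"
  shows "pfl (nxt k) (cc k) (map (bw k) [k+1..<k + 1 + k*k]) = k + 1
       \<and> pst (nxt k) (cc k) (map (bw k) [k+1..<k + 1 + k*k]) = cc k"
proof -
  have k1: "1 \<le> k" using k m1 by simp
  have S: "pfl (nxt k) (cc k) (map (bw k) [k+1..<2*k*m + 1]) = 2*m
    \<and> pst (nxt k) (cc k) (map (bw k) [k+1..<2*k*m + 1]) = k"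
    using even_sched[OF k m1, of m] m1 k by simp
  have h: "pfl (nxt k) k (map (bw k) [2*k*m + 1..<Suc (2*k*m + k)]) = 1
     \<and> pst (nxt k) k (map (bw k) [2*k*m + 1..<Suc (2*k*m + k)]) = nxt k k"
  proof (rule hit1)
    show "bw k (2*k*m + k) = k" using bw_asc[OF k1, of k m] by simp
    fix t assume t: "2*k*m + 1 \<le> t" "t < 2*k*m + k"
    have "bw k t = bw k (2*k*m + (t - 2*k*m))" using t by simp
    also have "\<dots> = t - 2*k*m" using t by (intro bw_asc k1) simp
    finally show "bw k t \<noteq> k" using t by simp
  qed (use k1 in simp)
  have kk: "k*k = 2*k*m" using k by simp
  have s: "k + 1 \<le> 2*k*m + 1" "2*k*m + 1 \<le> Suc (2*k*m + k)" using k m1 by simp_all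
  have e: "k + 1 + k*k = Suc (2*k*m + k)" using kk by simp
  show ?thesis unfolding e using pfl_split[OF s, of "nxt k" "cc k" "bw k"] S h even_facts(1,5)[OF k m1] k by (simp del: upt_Suc)
qed



lemma cycles:
  assumes "pfl f a (map (bw k) [T..<T + 2*k*h]) = K \<and> pst f a (map (bw k) [T..<T + 2*k*h]) = a"
  shows "pfl f a (map (bw k) [T..<T + 2*k*h*N]) = K*N \<and> pst f a (map (bw k) [T..<T + 2*k*h*N]) = a"
proof (induction N)
  case 0 then show ?case by simp
next
  case (Suc N)
  have sh: "map (bw k) [T + 2*k*h*N..<T + 2*k*h*N + 2*k*h] = map (bw k) [T..<T + 2*k*h]"
  proof (rule nth_equalityI)
    fix i assume "i < length (map (bw k) [T + 2*k*h*N..<T + 2*k*h*N + 2*k*h])"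
    then have "map (bw k) [T + 2*k*h*N..<T + 2*k*h*N + 2*k*h] ! i = bw k ((T + i) + 2*k*(h*N))"
      and "map (bw k) [T..<T + 2*k*h] ! i = bw k (T + i)" by (simp_all add: algebra_simps)
    then show "map (bw k) [T + 2*k*h*N..<T + 2*k*h*N + 2*k*h] ! i = map (bw k) [T..<T + 2*k*h] ! i"
      by (simp only: bw_period)
  qed simp
  have sp: "[T..<T + 2*k*h*Suc N] = [T..<T + 2*k*h*N] @ [T + 2*k*h*N..<T + 2*k*h*N + 2*k*h]"
  proof -
    have "[T..<(T + 2*k*h*N) + 2*k*h] = [T..<T + 2*k*h*N] @ [T + 2*k*h*N..<(T + 2*k*h*N) + 2*k*h]"
      by (rule upt_split) auto
    moreover have e: "T + 2*k*h*Suc N = (T + 2*k*h*N) + 2*k*h" by (simp add: algebra_simps)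
    ultimately show ?thesis by (simp only: e)
  qed
  show ?case unfolding sp using Suc sh assms by (simp add: pfl_append pst_append del: upt_Suc)
qed

lemma pfl_app_le: "pfl f a (xs @ ys) \<le> length xs + pfl f (pst f a xs) ys"
  using pfl_append[of f a xs ys] pfl_le[of f a xs] by simp

lemma fwf_mid_ge: "fwf_faults k (fwf_st k C xs) ys \<le> fwf_faults k C (xs @ ys @ zs)"
  by (simp add: fwf_append)

locale constr =
  fixes k s T1 h :: nat
  assumes k1: "1 \<le> k" and h1: "1 \<le> h"
    and P1: "sg k (k - 1) = s" "bw k s = s" "s \<le> k"
    and P2: "s + 1 \<le> T1" "T1 \<le> s + 1 + 2*k" "pst (nxt k) (sg k k) (map (bw k) [s+1..<T1]) = cc k"
    and P3: "pfl (nxt k) (cc k) (map (bw k) [T1..<T1 + 2*k*h]) = k + 1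
           \<and> pst (nxt k) (cc k) (map (bw k) [T1..<T1 + 2*k*h]) = cc k"
begin

definition Z where "Z = zl k (k - 1)"
definition J where "J M = Z @ map (bw k) [s+1..<s+1+M]"

lemma Z_props: "nwalk Z" "Z \<noteq> []" "last Z = s" "set Z \<subseteq> {0..k}"
  using zl_walk[of "k - 1" k] P1 unfolding Z_def by auto

lemma J_walk: "nwalk (J M)" "set (J M) \<subseteq> {0..k}" "length (J M) = length Z + M"
proof -
  have w: "nwalk (map (bw k) [s..<s+1+M])" by (rule nwalk_map_upt) (rule bw_step[OF k1])
  have "[s..<s+1+M] = s # [Suc s..<s+1+M]" by (rule upt_conv_Cons) simp
  then have "map (bw k) [s..<s+1+M] = s # map (bw k) [s+1..<s+1+M]"
    using P1(2) by simp
  then have "nwalk (last Z # map (bw k) [s+1..<s+1+M])" using w Z_props by simp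
  then show "nwalk (J M)" unfolding J_def using nwalk_join2 Z_props by blast
  show "set (J M) \<subseteq> {0..k}" unfolding J_def using Z_props bw_le[OF k1] by auto
  show "length (J M) = length Z + M" unfolding J_def by simp
qed

lemma fifo_J: "fifo_faults k [] (J M) \<le> length Z + 2*k + 2*k*h + (k+1) * ((s + 1 + M - T1) div (2*k*h))"
proof -
  let ?B = "map (bw k) [s+1..<s+1+M]"
  define N where "N = (s + 1 + M - T1) div (2*k*h)"
  have Q0: "fifo_st k [] Z = map (sg k) [0..<k]"
    using fifo_zl[of "k - 1" k] k1 unfolding Z_def by simp
  have Lq: "map (sg k) [0..<k] @ [sg k k] = map (sg k) [0..<Suc k]" by simp
  have ptr: "fifo_faults k (map (sg k) [0..<k]) ?B = pfl (nxt k) (sg k k) ?B"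
  proof (rule fifo_ptr)
    show "length (map (sg k) [0..<k]) = k" by simp
    show "1 \<le> k" by (rule k1)
    show "distinct (map (sg k) [0..<k] @ [sg k k])" unfolding Lq by (rule sg_distinct)
    show "cycl (nxt k) (map (sg k) [0..<k] @ [sg k k])" unfolding Lq by (rule cycl_sg[OF k1])
    have "set ?B \<subseteq> {0..k}" using bw_le[OF k1] by auto
    then show "set ?B \<subseteq> set (map (sg k) [0..<k] @ [sg k k])" unfolding Lq sg_all .
  qed
  have e1: "fifo_faults k [] (J M) = fifo_faults k [] Z + pfl (nxt k) (sg k k) ?B"
    unfolding J_def fifo_append Q0 ptr ..
  have z: "fifo_faults k [] Z \<le> length Z" by (rule fifo_le_length)
  show ?thesis
  proof (cases "T1 \<le> s + 1 + M")
    case False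
    have "pfl (nxt k) (sg k k) ?B \<le> length ?B" by (rule pfl_le)
    also have "\<dots> \<le> 2*k" using False P2 by simp
    finally show ?thesis using e1 z by linarith
  next
    case True
    have cN: "T1 + 2*k*h*N \<le> s + 1 + M"
    proof -
      have "2*k*h*N \<le> s + 1 + M - T1" unfolding N_def by (rule times_div_less_eq_dividend)
      then show ?thesis using True by simp
    qed
    have sp1: "[s+1..<s+1+M] = [s+1..<T1] @ [T1..<s+1+M]" using True P2 by (intro upt_split) auto
    have sp2: "[T1..<s+1+M] = [T1..<T1 + 2*k*h*N] @ [T1 + 2*k*h*N..<s+1+M]" using cN by (intro upt_split) auto
    have C: "pfl (nxt k) (cc k) (map (bw k) [T1..<T1 + 2*k*h*N]) = (k+1)*N
        \<and> pst (nxt k) (cc k) (map (bw k) [T1..<T1 + 2*k*h*N]) = cc k"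
      using cycles[OF P3, of N] by (simp add: mult.commute)
    have rest: "length (map (bw k) [T1 + 2*k*h*N..<s+1+M]) \<le> 2*k*h"
    proof -
      have D: "0 < 2*k*h" using k1 h1 by simp
      have "(s + 1 + M - T1) div (2*k*h) * (2*k*h) + (s + 1 + M - T1) mod (2*k*h) = s + 1 + M - T1"
        by (rule div_mult_mod_eq)
      moreover have "(s + 1 + M - T1) mod (2*k*h) < 2*k*h" using D by (rule mod_less_divisor)
      ultimately have lt: "s + 1 + M - T1 < N * (2*k*h) + 2*k*h" unfolding N_def by linarith
      have e: "N * (2*k*h) = 2*k*h*N" by simp
      have "length (map (bw k) [T1 + 2*k*h*N..<s+1+M]) = s + 1 + M - (T1 + 2*k*h*N)" by (simp only: length_map length_upt)
      then show ?thesis using lt unfolding e by linarith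
    qed
    have "pfl (nxt k) (sg k k) ?B \<le> length (map (bw k) [s+1..<T1])
        + pfl (nxt k) (cc k) (map (bw k) [T1..<s+1+M])"
      unfolding sp1 map_append using pfl_app_le[of "nxt k" "sg k k"] P2(3) by metis
    also have "pfl (nxt k) (cc k) (map (bw k) [T1..<s+1+M]) = (k+1)*N + pfl (nxt k) (cc k) (map (bw k) [T1 + 2*k*h*N..<s+1+M])"
      unfolding sp2 map_append pfl_append using C by simp
    also have "pfl (nxt k) (cc k) (map (bw k) [T1 + 2*k*h*N..<s+1+M]) \<le> 2*k*h"
      using pfl_le rest le_trans by blast
    finally have "pfl (nxt k) (sg k k) ?B \<le> length (map (bw k) [s+1..<T1]) + ((k+1)*N + 2*k*h)" by simp
    moreover have "length (map (bw k) [s+1..<T1]) \<le> 2*k" using P2 by simp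
    ultimately show ?thesis using e1 z unfolding N_def by linarith
  qed
qed

lemma fwf_J: assumes "6*k \<le> M" shows "M \<le> fwf_faults k {} (J M) + 6*k"
proof -
  define P where "P = M div (2*k) - 2"
  have k2: "0 < 2*k" using k1 by simp
  have q: "2*k*(M div (2*k)) \<le> M" by (simp add: times_div_less_eq_dividend)
  have q2: "M < 2*k*(M div (2*k)) + 2*k"
  proof -
    have "M div (2*k) * (2*k) + M mod (2*k) = M" by (rule div_mult_mod_eq)
    moreover have "M mod (2*k) < 2*k" using k2 by (rule mod_less_divisor)
    ultimately show ?thesis by (simp add: algebra_simps)
  qed
  have d3: "3 \<le> M div (2*k)"
  proof (rule ccontr)
    assume "\<not> 3 \<le> M div (2*k)"
    then have "M div (2*k) \<le> 2" by simp
    then have "2*k*(M div (2*k)) \<le> 2*k*2" by (rule mult_le_mono2)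
    then show False using q2 assms by linarith
  qed
  have SP: "2*k*Suc P = 2*k*(M div (2*k)) - 2*k" unfolding P_def using d3 by (simp add: algebra_simps)
  let ?X = "map (bw k) [s+1..<2*k*1]" and ?Y = "map (bw k) [2*k*1..<2*k*1 + 2*k*Suc P]"
    and ?W = "map (bw k) [2*k*1 + 2*k*Suc P..<s+1+M]"
  have s2: "s + 1 \<le> 2*k*1" using P1 k1 by simp
  have X3: "2*k*3 \<le> 2*k*(M div (2*k))" by (rule mult_le_mono2[OF d3])
  have s3: "2*k*1 + 2*k*Suc P \<le> s+1+M" using SP q X3 by arith
  have split: "map (bw k) [s+1..<s+1+M] = ?X @ ?Y @ ?W"
  proof -
    have "[s+1..<s+1+M] = [s+1..<2*k*1] @ [2*k*1..<s+1+M]" using s2 s3 by (intro upt_split) auto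
    moreover have "[2*k*1..<s+1+M] = [2*k*1..<2*k*1 + 2*k*Suc P] @ [2*k*1 + 2*k*Suc P..<s+1+M]"
      using s3 by (intro upt_split) auto
    ultimately show ?thesis by simp
  qed
  define C0 where "C0 = fwf_st k {} (Z @ ?X)"
  have inv: "finite C0" "card C0 \<le> k" using fwf_inv[OF k1, of "{}" "Z @ ?X"] unfolding C0_def by auto
  have "2*k*P \<le> fwf_faults k C0 ?Y" by (rule fwf_periods_any[OF k1 inv])
  also have "\<dots> \<le> fwf_faults k {} ((Z @ ?X) @ ?Y @ ?W)" unfolding C0_def by (rule fwf_mid_ge)
  also have "(Z @ ?X) @ ?Y @ ?W = J M" unfolding J_def split by simp
  finally have f: "2*k*P \<le> fwf_faults k {} (J M)" .
  have "M \<le> 2*k*P + 6*k" unfolding P_def using q2 d3 by (simp add: algebra_simps diff_mult_distrib2)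
  then show ?thesis using f by linarith
qed

end



lemma FWF_path: "distinct p \<Longrightarrow> set J \<subseteq> {0..<length p} \<Longrightarrow> FWF k (map ((!) p) J) = fwf_faults k {} J"
proof -
  assume d: "distinct p" and s: "set J \<subseteq> {0..<length p}"
  have i: "inj_on ((!) p) ({} \<union> set J)" using s by (intro inj_on_nth d) auto
  show ?thesis using fwf_map[OF i] by (simp add: FWF_def)
qed

lemma FIFO_path: "distinct p \<Longrightarrow> set J \<subseteq> {0..<length p} \<Longrightarrow> FIFO k (map ((!) p) J) = fifo_faults k [] J"
proof -
  assume d: "distinct p" and s: "set J \<subseteq> {0..<length p}"
  have i: "inj_on ((!) p) (set [] \<union> set J)" using s by (intro inj_on_nth d) auto
  show ?thesis using fifo_map[OF i, of k] by (simp add: FIFO_def)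
qed

context constr
begin

lemma lower:
  fixes V :: "'a set" and E p
  assumes fV: "finite V" and lp: "length p = Suc k" and dp: "distinct p" and sp: "set p \<subseteq> V"
    and ep: "\<And>i. Suc i < length p \<Longrightarrow> E (p ! i) (p ! Suc i)" and sym: "\<And>x y. E x y \<Longrightarrow> E y x"
    and n: "length Z + 6*k \<le> n"
  shows "(1 - real (k+1) / real (2*k*h)) * real n - real (8*k + 2*length Z + 2*k*h) \<le> MaxAB (FWF k) (FIFO k) n V E"
proof -
  define M where "M = n - length Z"
  define L where "L = length Z"
  define D where "D = 2*k*h"
  define N where "N = (s + 1 + M - T1) div D"
  define F where "F = fwf_faults k {} (J M)"
  define G where "G = fifo_faults k [] (J M)"
  have nLM: "n = L + M" unfolding M_def L_def using n by simp
  have M6: "6*k \<le> M" unfolding M_def using n by simp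
  have F1: "M \<le> F + 6*k" unfolding F_def by (rule fwf_J[OF M6])
  have G1: "G \<le> L + 2*k + D + (k+1) * N" unfolding G_def L_def D_def N_def by (rule fifo_J)
  have DN: "D * N \<le> M"
  proof -
    have "D * N \<le> s + 1 + M - T1" unfolding N_def by (rule times_div_less_eq_dividend)
    then show ?thesis using P2 by simp
  qed
  have Dpos: "0 < real D" unfolding D_def using k1 h1 by simp
  let ?I = "map ((!) p) (J M)"
  have sJ: "set (J M) \<subseteq> {0..<length p}" using J_walk(2)[of M] lp by auto
  have resp: "respects_graph V E ?I"
  proof (rule respects_path[of p k V E])
    show "length p = Suc k" by (rule lp)
    show "set p \<subseteq> V" by (rule sp)
    show "\<And>i. Suc i < length p \<Longrightarrow> E (p ! i) (p ! Suc i)" by (rule ep)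
    show "\<And>x y. E x y \<Longrightarrow> E y x" by (rule sym)
    show "nwalk (J M)" by (rule J_walk(1))
    show "set (J M) \<subseteq> {0..k}" by (rule J_walk(2))
  qed
  have len: "length ?I = n" using J_walk(3)[of M] nLM L_def by simp
  have v: "p ! 0 \<in> V" using sp lp by auto
  have ge: "real (FWF k ?I) - real (FIFO k ?I) \<le> MaxAB (FWF k) (FIFO k) n V E"
    using MaxAB_ge[OF k1 fV v resp len] .
  have FW: "FWF k ?I = F" unfolding F_def using FWF_path[OF dp sJ] .
  have FI: "FIFO k ?I = G" unfolding G_def using FIFO_path[OF dp sJ] .
  have r1: "real M \<le> real F + 6 * real k" using F1 by linarith
  have "real G \<le> real (L + 2*k + D + (k+1)*N)" using G1 by (simp only: of_nat_le_iff)
  then have r2: "real G \<le> real L + 2 * real k + real D + (real k + 1) * real N" by (simp add: algebra_simps)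
  have "real (D * N) \<le> real M" using DN by (simp only: of_nat_le_iff)
  then have "real N * real D \<le> real M" by (simp add: mult.commute)
  then have r3: "real N \<le> real M / real D" using Dpos by (simp add: pos_le_divide_eq)
  have r4: "(real k + 1) * real N \<le> (real k + 1) * (real M / real D)"
    using r3 by (intro mult_left_mono) auto
  have key: "(1 - real (k+1) / real D) * real n - real (8*k + 2*L + D) \<le> real F - real G"
  proof -
    define q where "q = real (k+1) / real D"
    have a: "(real k + 1) * real N \<le> q * real M" using r4 unfolding q_def by (simp add: add.commute)
    have b: "0 \<le> q * real L" unfolding q_def by simp
    have c: "(1 - q) * real n = real L + real M - q * real L - q * real M"
      using nLM by (simp add: algebra_simps)
    have d: "real (8*k + 2*L + D) = 8 * real k + 2 * real L + real D" by simp
    have "(1 - q) * real n - real (8*k + 2*L + D) \<le> real F - real G"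
      unfolding d using a b c r1 r2 by linarith
    then show ?thesis unfolding q_def .
  qed
  show ?thesis using key ge FW FI unfolding D_def L_def by simp
qed

end

lemma sg_odd: "k = 2*m + 1 \<Longrightarrow> sg k (k - 1) = k \<and> sg k k = 0"
  by (simp add: sg_def cc_def)

lemma sg_even: "k = 2*m \<Longrightarrow> 1 \<le> m \<Longrightarrow> sg k (k - 1) = 0 \<and> sg k k = k"
proof -
  assume k: "k = 2*m" and m: "1 \<le> m"
  have c: "cc k = m" using k by (simp add: cc_def)
  have o: "odd (k - 1)" using k m by simp
  have "(k - 1 + 1) div 2 = m" using k m by simp
  then show ?thesis using c o k by (simp add: sg_def)
qed

lemma constr_odd:
  assumes k: "k = 2*m + 1" and m: "1 \<le> m"
  shows "constr k k (2*k+1) (m+1)"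
proof
  have k1: "1 \<le> k" using k by simp
  show "1 \<le> k" by (rule k1)
  show "1 \<le> m + 1" by simp
  show "sg k (k - 1) = k" using sg_odd[OF k] by simp
  show "bw k k = k" by (rule bw_low[OF k1]) simp
  show "k \<le> k" by simp
  show "k + 1 \<le> 2*k + 1" "2*k + 1 \<le> k + 1 + 2*k" by simp_all
  have h: "pfl (nxt k) 0 (map (bw k) [k+1..<Suc (2*k)]) = 1 \<and> pst (nxt k) 0 (map (bw k) [k+1..<Suc (2*k)]) = nxt k 0"
  proof (rule hit1)
    show "bw k (2*k) = 0" using bw_high[OF k1, of "2*k"] by simp
    fix t assume "k + 1 \<le> t" "t < 2*k"
    then show "bw k t \<noteq> 0" using bw_high[OF k1, of t] by simp
  qed (use k1 in simp)
  have "nxt k (m - m) = m + 1" using odd_facts(3)[OF k, of m] by simp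
  then have n0: "nxt k 0 = cc k" using odd_facts(1)[OF k] by simp
  show "pst (nxt k) (sg k k) (map (bw k) [k+1..<2*k+1]) = cc k" using h n0 sg_odd[OF k] by simp
  have C: "pfl (nxt k) (cc k) (map (bw k) [1..<1 + k*(k+1)]) = k + 1
       \<and> pst (nxt k) (cc k) (map (bw k) [1..<1 + k*(k+1)]) = cc k" by (rule odd_cycle[OF k])
  have e: "2*k*(m+1) = k*(k+1)" using k by (simp add: algebra_simps)
  have sh: "map (bw k) [2*k+1..<2*k+1 + k*(k+1)] = map (bw k) [1..<1 + k*(k+1)]"
  proof (rule nth_equalityI)
    fix i assume i: "i < length (map (bw k) [2*k+1..<2*k+1 + k*(k+1)])"
    have "map (bw k) [2*k+1..<2*k+1 + k*(k+1)] ! i = bw k (2*k+1 + i)" using i by (simp del: upt_Suc)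
    also have "2*k+1 + i = (1 + i) + 2*k*1" by simp
    also have "bw k ((1 + i) + 2*k*1) = bw k (1 + i)" by (rule bw_period)
    also have "bw k (1 + i) = map (bw k) [1..<1 + k*(k+1)] ! i" using i by (simp del: upt_Suc)
    finally show "map (bw k) [2*k+1..<2*k+1 + k*(k+1)] ! i = map (bw k) [1..<1 + k*(k+1)] ! i" .
  qed simp
  show "pfl (nxt k) (cc k) (map (bw k) [2*k+1..<2*k+1 + 2*k*(m+1)]) = k + 1
       \<and> pst (nxt k) (cc k) (map (bw k) [2*k+1..<2*k+1 + 2*k*(m+1)]) = cc k"
    unfolding e sh by (rule C)
qed

lemma constr_even:
  assumes k: "k = 2*m" and m: "1 \<le> m"
  shows "constr k 0 (k+1) m"
proof
  have k1: "1 \<le> k" using k m by simp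
  show "1 \<le> k" by (rule k1)
  show "1 \<le> m" by (rule m)
  show "sg k (k - 1) = 0" using sg_even[OF k m] by simp
  show "bw k 0 = 0" by (rule bw_low[OF k1]) simp
  show "0 \<le> k" by simp
  show "0 + 1 \<le> k + 1" "k + 1 \<le> 0 + 1 + 2*k" by simp_all
  have h: "pfl (nxt k) k (map (bw k) [1..<Suc k]) = 1 \<and> pst (nxt k) k (map (bw k) [1..<Suc k]) = nxt k k"
  proof (rule hit1)
    show "bw k k = k" by (rule bw_low[OF k1]) simp
    fix t assume "1 \<le> t" "t < k"
    then show "bw k t \<noteq> k" using bw_low[OF k1, of t] by simp
  qed (use k1 in simp)
  show "pst (nxt k) (sg k k) (map (bw k) [0+1..<k+1]) = cc k"
    using h even_facts(1,5)[OF k m] sg_even[OF k m] by simp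
  have e: "2*k*m = k*k" using k by simp
  show "pfl (nxt k) (cc k) (map (bw k) [k+1..<k+1 + 2*k*m]) = k + 1
       \<and> pst (nxt k) (cc k) (map (bw k) [k+1..<k+1 + 2*k*m]) = cc k"
    unfolding e by (rule even_cycle[OF k m])
qed



lemma lb_constr:
  fixes V :: "'a set" and E p
  assumes C: "constr k s T1 h" and fV: "finite V" and lp: "length p = Suc k" and dp: "distinct p" and sp: "set p \<subseteq> V"
    and ep: "\<And>i. Suc i < length p \<Longrightarrow> E (p ! i) (p ! Suc i)" and sym: "\<And>x y. E x y \<Longrightarrow> E y x"
  shows "ereal (1 - real (k+1) / real (2*k*h)) \<le> MaxG (FWF k) (FIFO k) V E"
proof -
  interpret constr k s T1 h by (rule C)
  have v: "p ! 0 \<in> V" using sp lp by auto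
  show ?thesis
  proof (rule MaxG_lb[OF k1 fV v])
    fix n assume "n \<ge> length Z + 6*k"
    then show "(1 - real (k+1) / real (2*k*h)) * real n - real (8*k + 2*length Z + 2*k*h)
      \<le> MaxAB (FWF k) (FIFO k) n V E"
      using lower[where V=V and E=E and p=p, OF fV lp dp sp ep sym] by blast
  qed
qed

theorem theorem3:
  fixes k :: nat and V :: "'a set" and E :: "'a \<Rightarrow> 'a \<Rightarrow> bool"
  assumes "k \<ge> 1"
    and "access_graph V E"
    and "has_path V E (k + 1)"
  shows "(odd k \<longrightarrow>
            rel_interval (FWF k) (FIFO k) V E = {0 .. ereal (1 - 1 / real k)})
       \<and> (even k \<longrightarrow>
            {0 .. ereal ((real k ^ 2 - real k - 1) / real k ^ 2)} \<subseteq> rel_interval (FWF k) (FIFO k) V E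
          \<and> rel_interval (FWF k) (FIFO k) V E \<subseteq> {0 .. ereal ((real k - 1) / real k)})"
proof -
  have k1: "1 \<le> k" using assms(1) by simp
  obtain p where lp: "length p = k + 1" and dp: "distinct p" and sp: "set p \<subseteq> V"
    and ep: "\<And>i. Suc i < length p \<Longrightarrow> E (p ! i) (p ! Suc i)"
    using assms(3) unfolding has_path_def by blast
  have fV: "finite V" and sym: "\<And>x y. E x y \<Longrightarrow> E y x" using assms(2) unfolding access_graph_def by auto
  have lp': "length p = Suc k" using lp by simp
  have v: "p ! 0 \<in> V" using sp lp by auto
  have mg: "MinG (FWF k) (FIFO k) V E = 0" by (rule MinG_0[OF k1 fV v])
  have ub: "MaxG (FWF k) (FIFO k) V E \<le> ereal (1 - 1 / real k)" by (rule MaxG_ub[OF k1 fV v])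
  have RI: "rel_interval (FWF k) (FIFO k) V E = {0 .. MaxG (FWF k) (FIFO k) V E}"
    unfolding rel_interval_def mg ..
  have kpos: "0 < real k" using k1 by simp
  show ?thesis
  proof (intro conjI impI)
    assume ok: "odd k"
    have lb: "ereal (1 - 1 / real k) \<le> MaxG (FWF k) (FIFO k) V E"
    proof (cases "k = 1")
      case True
      then show ?thesis using MaxG_ge0[OF k1 fV v] by (simp add: zero_ereal_def)
    next
      case False
      obtain m where k: "k = 2*m + 1" using ok oddE by blast
      have m1: "1 \<le> m" using k False by simp
      have "ereal (1 - real (k+1) / real (2*k*(m+1))) \<le> MaxG (FWF k) (FIFO k) V E"
        by (rule lb_constr[where V=V and E=E and p=p, OF constr_odd[OF k m1] fV lp' dp sp ep sym])
      moreover have "real (k+1) / real (2*k*(m+1)) = 1 / real k"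
      proof -
        have "real (2*k*(m+1)) = real k * real (k+1)" unfolding k by (simp add: algebra_simps)
        then show ?thesis using kpos by simp
      qed
      ultimately show ?thesis by simp
    qed
    show "rel_interval (FWF k) (FIFO k) V E = {0 .. ereal (1 - 1 / real k)}"
      unfolding RI using antisym[OF ub lb] by simp
  next
    assume ek: "even k"
    obtain m where k: "k = 2*m" using ek by blast
    have m1: "1 \<le> m" using k k1 by simp
    have l0: "ereal (1 - real (k+1) / real (2*k*m)) \<le> MaxG (FWF k) (FIFO k) V E"
      by (rule lb_constr[where V=V and E=E and p=p, OF constr_even[OF k m1] fV lp' dp sp ep sym])
    have "1 - real (k+1) / real (2*k*m) = (real k ^ 2 - real k - 1) / real k ^ 2"
    proof -
      have "real (2*k*m) = real k ^ 2" using k by (simp add: power2_eq_square)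
      then show ?thesis using kpos by (simp add: field_simps)
    qed
    then have lb: "ereal ((real k ^ 2 - real k - 1) / real k ^ 2) \<le> MaxG (FWF k) (FIFO k) V E"
      using l0 by simp
    show "{0 .. ereal ((real k ^ 2 - real k - 1) / real k ^ 2)} \<subseteq> rel_interval (FWF k) (FIFO k) V E"
      unfolding RI using lb by auto
    have "1 - 1 / real k = (real k - 1) / real k" using kpos by (simp add: field_simps)
    then show "rel_interval (FWF k) (FIFO k) V E \<subseteq> {0 .. ereal ((real k - 1) / real k)}"
      unfolding RI using ub by auto
  qed
qed


end
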